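(* In the setting of the context, there exist $s_{11}$ and a constant $C\ge1$ (depending only on $p,\mu,K$) such that for all $s\ge s_{11}$: (i) $R(\cdot,s)\in\vartheta_C(s)$ and $|R_2(s)|\le\frac{C}{s^{4\beta}}$; (ii) $\|V(\cdot,s)\|_{L^\infty(\mathbb{R})}\le C$ and $|V(y,s)|\le C\frac{1+|y|^2}{s^{2\beta}}$ for all $y\in\mathbb{R}$.
   Context: Let $p>3$, $\mu>0$, $q=\frac{2p}{p+1}$, $\beta=\frac{p+1}{2(p-1)}$, $\kappa=(p-1)^{-1/(p-1)}$, $b=\frac12(p-1)^{\frac{p-2}{p-1}}\left(\frac{(4\pi)^{1/2}(p+1)^2}{p\int_{\mathbb{R}}|y|^qe^{-y^2/4}dy}\right)^{\frac{p+1}{p-1}}\mu^{-\frac{p+1}{p-1}}$, $a_*=\frac{2b\kappa}{(p-1)^2}$, $\varphi(y,s)=(p-1+by^2s^{-2\beta})^{-\frac1{p-1}}+a_*s^{-2\beta}$, $V=p\varphi^{p-1}-\frac p{p-1}$, $R=\partial_y^2\varphi-\frac12y\partial_y\varphi-\frac{\varphi}{p-1}+\varphi^p-\partial_s\varphi+\mu|\partial_y\varphi|^q$. Let $\rho(y)=e^{-y^2/4}/\sqrt{4\pi}$, $h_0=1,h_1=y,h_2=y^2-2$, $k_m=h_m/\int h_m^2\rho$. Fix $\chi_0\in C^\infty([0,\infty),[0,1])$ nonincreasing, $=1$ on $[0,1]$, support in $[0,2]$, a fixed constant $K\ge6$, $\chi(y,s)=\chi_0(|y|/(Ks^\beta))$.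 For $r\in L^\infty(\mathbb{R})$ at time $s$: $r_b=\chi(\cdot,s)r$, $r_e=(1-\chi(\cdot,s))r$, $r_m=\int r_bk_m\rho$ ($m=0,1,2$), $r_-=r_b-\sum_{m=0}^2r_mh_m$. Fix $\gamma$ with $3\beta<\gamma<\min(5\beta-1,2\beta+1)$. For $A\ge1$, $s\ge1$, $\vartheta_A(s)$ is the set of $r\in L^\infty(\mathbb{R})$ with $\|r_e\|_{L^\infty}\le A^2s^{-(\gamma-3\beta)}$, $\|r_-(y)/(1+|y|^3)\|_{L^\infty}\le As^{-\gamma}$, $|r_0|,|r_1|\le As^{-(2\beta+1)}$, $|r_2|\le\sqrt As^{-(4\beta-1)}$. *)

theory Defs
  imports "HOL-Analysis.Analysis"
begin

definition qexp :: "real \<Rightarrow> real" where "qexp p = 2 * p / (p + 1)"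
definition betaexp :: "real \<Rightarrow> real" where "betaexp p = (p + 1) / (2 * (p - 1))"
definition kappa :: "real \<Rightarrow> real" where "kappa p = (p - 1) powr (- 1 / (p - 1))"

definition bconst :: "real \<Rightarrow> real \<Rightarrow> real" where
  "bconst p mu = 1/2 * (p - 1) powr ((p - 2) / (p - 1)) *
     ((sqrt (4 * pi) * (p + 1)^2 /
        (p * (LINT y|lborel. \<bar>y\<bar> powr (qexp p) * exp (- (y^2) / 4))))
       powr ((p + 1) / (p - 1))) * mu powr (- (p + 1) / (p - 1))"

definition astar :: "real \<Rightarrow> real \<Rightarrow> real" where
  "astar p mu = 2 * bconst p mu * kappa p / (p - 1)^2"

definition phi :: "real \<Rightarrow> real \<Rightarrow> real \<Rightarrow> real \<Rightarrow> real" where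
  "phi p mu y s = (p - 1 + bconst p mu * y^2 * s powr (- 2 * betaexp p)) powr (- 1 / (p - 1))
                  + astar p mu * s powr (- 2 * betaexp p)"

definition Vpot :: "real \<Rightarrow> real \<Rightarrow> real \<Rightarrow> real \<Rightarrow> real" where
  "Vpot p mu y s = p * (phi p mu y s) powr (p - 1) - p / (p - 1)"

definition Rerr :: "real \<Rightarrow> real \<Rightarrow> real \<Rightarrow> real \<Rightarrow> real" where
  "Rerr p mu y s =
     deriv (\<lambda>z. deriv (\<lambda>w. phi p mu w s) z) y
     - y / 2 * deriv (\<lambda>w. phi p mu w s) y
     - phi p mu y s / (p - 1)
     + (phi p mu y s) powr p
     - deriv (\<lambda>t. phi p mu y t) s
     + mu * \<bar>deriv (\<lambda>w. phi p mu w s) y\<bar> powr (qexp p)"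

definition rho :: "real \<Rightarrow> real" where "rho y = exp (- (y^2) / 4) / sqrt (4 * pi)"

fun herm :: "nat \<Rightarrow> real \<Rightarrow> real" where
  "herm 0 y = 1"
| "herm (Suc 0) y = y"
| "herm (Suc (Suc 0)) y = y^2 - 2"
| "herm _ y = 0"

definition kherm :: "nat \<Rightarrow> real \<Rightarrow> real" where
  "kherm m y = herm m y / (LINT z|lborel. (herm m z)^2 * rho z)"

definition smooth_real :: "(real \<Rightarrow> real) \<Rightarrow> bool" where
  "smooth_real f \<longleftrightarrow> (\<forall>n. ((deriv ^^ n) f) differentiable_on UNIV)"

definition cutoff :: "(real \<Rightarrow> real) \<Rightarrow> real \<Rightarrow> real \<Rightarrow> real \<Rightarrow> real \<Rightarrow> real" where
  "cutoff chi0 K p y s = chi0 (\<bar>y\<bar> / (K * s powr betaexp p))"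

definition rpart_b :: "(real \<Rightarrow> real) \<Rightarrow> real \<Rightarrow> real \<Rightarrow> real \<Rightarrow> (real \<Rightarrow> real) \<Rightarrow> real \<Rightarrow> real" where
  "rpart_b chi0 K p s r y = cutoff chi0 K p y s * r y"

definition rpart_e :: "(real \<Rightarrow> real) \<Rightarrow> real \<Rightarrow> real \<Rightarrow> real \<Rightarrow> (real \<Rightarrow> real) \<Rightarrow> real \<Rightarrow> real" where
  "rpart_e chi0 K p s r y = (1 - cutoff chi0 K p y s) * r y"

definition rcoef :: "(real \<Rightarrow> real) \<Rightarrow> real \<Rightarrow> real \<Rightarrow> real \<Rightarrow> (real \<Rightarrow> real) \<Rightarrow> nat \<Rightarrow> real" where
  "rcoef chi0 K p s r m = (LINT y|lborel. rpart_b chi0 K p s r y * kherm m y * rho y)"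

definition rpart_minus :: "(real \<Rightarrow> real) \<Rightarrow> real \<Rightarrow> real \<Rightarrow> real \<Rightarrow> (real \<Rightarrow> real) \<Rightarrow> real \<Rightarrow> real" where
  "rpart_minus chi0 K p s r y =
     rpart_b chi0 K p s r y - (\<Sum>m\<le>2. rcoef chi0 K p s r m * herm m y)"

definition Linf :: "(real \<Rightarrow> real) \<Rightarrow> bool" where
  "Linf f \<longleftrightarrow> f \<in> borel_measurable lborel \<and> (\<exists>M. AE y in lborel. \<bar>f y\<bar> \<le> M)"

definition Linf_le :: "(real \<Rightarrow> real) \<Rightarrow> real \<Rightarrow> bool" where
  "Linf_le f c \<longleftrightarrow> (AE y in lborel. \<bar>f y\<bar> \<le> c)"

definition vartheta ::
  "(real \<Rightarrow> real) \<Rightarrow> real \<Rightarrow> real \<Rightarrow> real \<Rightarrow> real \<Rightarrow> real \<Rightarrow> (real \<Rightarrow> real) set" where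
  "vartheta chi0 K p gam A s = {r. Linf r \<and>
      Linf_le (rpart_e chi0 K p s r) (A^2 * s powr (- (gam - 3 * betaexp p))) \<and>
      Linf_le (\<lambda>y. rpart_minus chi0 K p s r y / (1 + \<bar>y\<bar>^3)) (A * s powr (- gam)) \<and>
      \<bar>rcoef chi0 K p s r 0\<bar> \<le> A * s powr (- (2 * betaexp p + 1)) \<and>
      \<bar>rcoef chi0 K p s r 1\<bar> \<le> A * s powr (- (2 * betaexp p + 1)) \<and>
      \<bar>rcoef chi0 K p s r 2\<bar> \<le> sqrt A * s powr (- (4 * betaexp p - 1))}"

end

theory Submission
  imports Defs "HOL-Probability.Probability" "HOL-Real_Asymp.Real_Asymp"
begin

lemma powr_mvt:
  fixes x y r :: real
  assumes "0 < x" "x \<le> y"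
  shows "\<exists>z. x \<le> z \<and> z \<le> y \<and> y powr r - x powr r = (y - x) * (r * z powr (r - 1))"
proof (cases "x = y")
  case True thus ?thesis by auto
next
  case False
  hence "x < y" using assms by simp
  have "\<exists>z. x < z \<and> z < y \<and> y powr r - x powr r = (y - x) * (r * z powr (r - 1))"
    by (rule MVT2[OF \<open>x < y\<close>]) (use assms in \<open>auto intro!: has_real_derivative_powr\<close>)
  thus ?thesis by (auto intro: less_imp_le)
qed

lemma powr_lip_neg:
  fixes c w r :: real
  assumes "0 < c" "0 \<le> w" "0 \<le> r"
  shows "\<bar>(c + w) powr (- r) - c powr (- r)\<bar> \<le> r * c powr (- r - 1) * w"
proof -
  obtain z where z: "c \<le> z" "z \<le> c + w" "(c + w) powr (- r) - c powr (- r) = w * (- r * z powr (- r - 1))"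
    using powr_mvt[of c "c + w" "- r"] assms by auto
  have "z powr (- r - 1) \<le> c powr (- r - 1)" using z assms by (intro powr_mono2') auto
  hence "\<bar>w * (- r * z powr (- r - 1))\<bar> \<le> w * (r * c powr (- r - 1))"
    using assms by (auto simp: abs_mult intro!: mult_left_mono)
  thus ?thesis using z by (simp add: algebra_simps)
qed

lemma powr_diff_up:
  fixes x y r :: real
  assumes "0 < x" "x \<le> y" "1 \<le> r"
  shows "0 \<le> y powr r - x powr r \<and> y powr r - x powr r \<le> (y - x) * r * y powr (r - 1)"
proof -
  obtain z where z: "x \<le> z" "z \<le> y" "y powr r - x powr r = (y - x) * (r * z powr (r - 1))"
    using powr_mvt[of x y r] assms by auto
  have "z powr (r - 1) \<le> y powr (r - 1)" using z assms by (intro powr_mono2) auto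
  hence "(y - x) * (r * z powr (r - 1)) \<le> (y - x) * (r * y powr (r - 1))"
    using assms by (intro mult_left_mono) auto
  moreover have "0 \<le> (y - x) * (r * z powr (r - 1))" using assms by auto
  ultimately show ?thesis using z by (simp add: algebra_simps)
qed

lemma powr_taylor2:
  fixes x e p :: real
  assumes "0 < x" "0 \<le> e" "2 \<le> p"
  shows "\<bar>(x + e) powr p - x powr p - p * x powr (p - 1) * e\<bar> \<le> p * (p - 1) * (x + e) powr (p - 2) * e^2"
proof -
  obtain z where z: "x \<le> z" "z \<le> x + e" "(x + e) powr p - x powr p = e * (p * z powr (p - 1))"
    using powr_mvt[of x "x + e" p] assms by auto
  have zx: "0 \<le> z powr (p - 1) - x powr (p - 1) \<and> z powr (p - 1) - x powr (p - 1) \<le> (z - x) * (p - 1) * z powr (p - 1 - 1)"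
    using powr_diff_up[of x z "p - 1"] assms z by auto
  have "z powr (p - 2) \<le> (x + e) powr (p - 2)" using z assms by (intro powr_mono2) auto
  moreover have "p - 1 - 1 = p - 2" by simp
  ultimately have "z powr (p - 1 - 1) \<le> (x + e) powr (p - 2)" by simp
  hence "(z - x) * (p - 1) * z powr (p - 1 - 1) \<le> e * (p - 1) * (x + e) powr (p - 2)"
    using z assms by (intro mult_mono) auto
  hence A: "\<bar>z powr (p - 1) - x powr (p - 1)\<bar> \<le> e * (p - 1) * (x + e) powr (p - 2)"
    using zx by auto
  have "(x + e) powr p - x powr p - p * x powr (p - 1) * e = e * p * (z powr (p - 1) - x powr (p - 1))"
    using z by (simp add: algebra_simps)
  hence "\<bar>(x + e) powr p - x powr p - p * x powr (p - 1) * e\<bar> = e * p * \<bar>z powr (p - 1) - x powr (p - 1)\<bar>"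
    using assms by (simp add: abs_mult)
  also have "\<dots> \<le> e * p * (e * (p - 1) * (x + e) powr (p - 2))"
    using A assms by (intro mult_left_mono) auto
  finally show ?thesis by (simp add: power2_eq_square algebra_simps)
qed

locale LL =
  fixes p mu :: real
  assumes p3: "p > 3" and mu0: "mu > 0"
begin

abbreviation "q \<equiv> qexp p"
abbreviation "\<beta> \<equiv> betaexp p"
abbreviation "b \<equiv> bconst p mu"
abbreviation "a \<equiv> astar p mu"
abbreviation "\<kappa> \<equiv> kappa p"
definition "al = 1 / (p - 1)"

lemma al_pos: "al > 0" using p3 by (simp add: al_def)
lemma al_p1: "al * (p - 1) = 1" using p3 by (simp add: al_def)
lemma beta_bounds: "1/2 < \<beta>" "\<beta> < 1"
  using p3 by (auto simp: betaexp_def field_simps)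
lemma q_bounds: "1 < q" "q < 2"
  using p3 by (auto simp: qexp_def field_simps)
lemma betaq_eq: "\<beta> * q = p / (p - 1)"
proof -
  have "p - 1 \<noteq> 0" "p + 1 \<noteq> 0" using p3 by auto
  hence "\<beta> * q = ((p+1)*(2*p)) / ((2*(p-1))*(p+1))" by (simp add: betaexp_def qexp_def)
  also have "\<dots> = p / (p - 1)" using \<open>p + 1 \<noteq> 0\<close> \<open>p - 1 \<noteq> 0\<close>
    by (simp add: divide_simps)
  finally show ?thesis .
qed
lemma betaq: "2 * \<beta> * q = 2 * \<beta> + 1"
proof -
  have "p - 1 \<noteq> 0" "p + 1 \<noteq> 0" using p3 by auto
  hence "2 * \<beta> + 1 = 2 * p / (p - 1)" by (simp add: betaexp_def field_simps)
  thus ?thesis using betaq_eq by (simp add: mult.assoc)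
qed
lemma betaq1: "\<beta> * q > 1"
  using p3 by (simp add: betaq_eq)

definition "sig s = s powr (- 2 * \<beta>)"
definition "GG y s = p - 1 + b * y^2 * sig s"

lemma phi_eq: "phi p mu y s = GG y s powr (- al) + a * sig s"
  by (simp add: phi_def GG_def sig_def al_def)

lemma b_nonneg: "b \<ge> 0" by (simp add: bconst_def)
lemma kappa_pos: "\<kappa> > 0" using p3 by (simp add: kappa_def)
lemma a_nonneg: "a \<ge> 0" using b_nonneg kappa_pos p3 by (simp add: astar_def)
lemma sig_pos: "sig s > 0" if "s > 0" using that by (simp add: sig_def)
lemma GG_ge: "GG y s \<ge> p - 1" if "s > 0"
  using that b_nonneg sig_pos[OF that] by (simp add: GG_def)
lemma GG_pos: "GG y s > 0" if "s > 0" using GG_ge[OF that, of y] p3 by linarith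

definition "D1 y s = - al * GG y s powr (- al - 1) * (2 * b * y * sig s)"

lemma D1_deriv: "((\<lambda>w. phi p mu w s) has_real_derivative D1 y s) (at y)" if "s > 0"
proof -
  have "((\<lambda>w. GG w s powr (- al) + a * sig s) has_real_derivative D1 y s) (at y)"
    unfolding GG_def D1_def
    apply (rule derivative_eq_intros refl | use GG_pos[OF that] in \<open>simp add: GG_def\<close>)+
    done
  thus ?thesis by (simp add: phi_eq)
qed

definition "D2 y s = - 2 * al * b * sig s * GG y s powr (- al - 1)
   + 4 * al * (al + 1) * b^2 * y^2 * (sig s)^2 * GG y s powr (- al - 2)"

lemma D2_deriv: "((\<lambda>w. D1 w s) has_real_derivative D2 y s) (at y)" if "s > 0"
proof -
  have "((\<lambda>w. D1 w s) has_real_derivative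
     - al * ((- al - 1) * GG y s powr (- al - 1 - 1) * (2 * b * y * sig s)) * (2 * b * y * sig s)
     + - al * GG y s powr (- al - 1) * (2 * b * sig s)) (at y)"
    unfolding GG_def D1_def
    apply (rule derivative_eq_intros refl | use GG_pos[OF that, of y] in \<open>simp add: GG_def\<close>)+
    done
  moreover have "- al * ((- al - 1) * GG y s powr (- al - 1 - 1) * (2 * b * y * sig s)) * (2 * b * y * sig s)
     + - al * GG y s powr (- al - 1) * (2 * b * sig s) = D2 y s"
    by (simp add: D2_def power2_eq_square algebra_simps diff_diff_eq)
  ultimately show ?thesis by simp
qed

definition "Ds y s = 2 * al * \<beta> * b * y^2 * sig s * GG y s powr (- al - 1) / s
   - 2 * \<beta> * a * sig s / s"

lemma Ds_deriv: "((\<lambda>t. phi p mu y t) has_real_derivative Ds y s) (at s)" if "s > 0"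
proof -
  have e: "s powr (- 2 * \<beta> - 1) = sig s / s" using that
    by (simp add: sig_def powr_diff)
  have "((\<lambda>t. GG y t powr (- al) + a * t powr (- 2 * \<beta>)) has_real_derivative
      - al * GG y s powr (- al - 1) * (b * y^2 * ((- 2 * \<beta>) * s powr (- 2 * \<beta> - 1)))
      + a * ((- 2 * \<beta>) * s powr (- 2 * \<beta> - 1))) (at s)"
    unfolding GG_def sig_def
    apply (rule derivative_eq_intros refl | use GG_pos[OF that, of y] that in \<open>simp add: GG_def sig_def\<close>)+
    done
  moreover have "- al * GG y s powr (- al - 1) * (b * y^2 * ((- 2 * \<beta>) * s powr (- 2 * \<beta> - 1)))
      + a * ((- 2 * \<beta>) * s powr (- 2 * \<beta> - 1)) = Ds y s"
    unfolding e Ds_def by (simp add: algebra_simps)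
  moreover have "(\<lambda>t. phi p mu y t) = (\<lambda>t. GG y t powr (- al) + a * t powr (- 2 * \<beta>))"
    by (simp add: phi_eq sig_def)
  ultimately show ?thesis by simp
qed

lemma deriv_phi: "deriv (\<lambda>w. phi p mu w s) = (\<lambda>z. D1 z s)" if "s > 0"
  using D1_deriv[OF that] by (auto intro!: DERIV_imp_deriv)

definition "Rform y s = D2 y s - y / 2 * D1 y s - phi p mu y s / (p - 1) + phi p mu y s powr p
   - Ds y s + mu * \<bar>D1 y s\<bar> powr q"

lemma Rerr_eq: "Rerr p mu y s = Rform y s" if "s > 0"
  using that by (simp add: Rerr_def Rform_def deriv_phi DERIV_imp_deriv[OF D2_deriv[OF that]]
     DERIV_imp_deriv[OF Ds_deriv[OF that]])

definition "P0 = (p - 1) powr (- al - 1)"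

lemma a_eq: "a = 2 * al * b * P0"
proof -
  have "P0 = (p - 1) powr (- al) * (p - 1) powr (- 1)" unfolding P0_def
    using powr_add[of "p-1" "-al" "-1"] by simp
  also have "\<dots> = \<kappa> / (p - 1)" using p3
    by (simp add: kappa_def al_def powr_minus divide_simps)
  finally have "P0 = \<kappa> / (p - 1)" .
  thus ?thesis by (simp add: astar_def al_def power2_eq_square)
qed

lemma alg_id:
  fixes F G P P0 a al b y sg u pp bt T2 T3 T5 A :: real
  assumes "F = G * P" "G = pp - 1 + b * y^2 * sg" "a = 2 * al * b * P0" "al * (pp - 1) = 1"
  shows "(- 2 * al * b * sg * P + T2) - y / 2 * (- al * P * (2 * b * y * sg)) - al * (F + a * sg)
     + (T3 + P + pp * a * sg * gi)
     - (2 * al * bt * b * y^2 * sg * P * u - 2 * bt * a * sg * u) + (T5 + A)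
   = u * sg * (2 * bt * a - bt * a * y^2) + A
     + sg * (- 2 * al * b * (P - P0) + pp * a * (gi - al)) + T2 + T3
     + (- 2 * al * bt * b * sg * y^2 * (P - P0) * u) + T5"
  using assms by algebra

definition "FF y s = GG y s powr (- al)"
definition "PP y s = GG y s powr (- al - 1)"
definition "QQ y s = GG y s powr (- al - 2)"
definition "tau s = sig s / s"
definition "Mf y = 2 * \<beta> * a - \<beta> * a * y^2 + mu * a powr q * \<bar>y\<bar> powr q"
definition "Bf y s = - 2 * al * b * (PP y s - P0) + p * a * (1 / GG y s - al)"
definition "T2f y s = 4 * al * (al + 1) * b^2 * y^2 * (sig s)^2 * QQ y s"
definition "T3f y s = (FF y s + a * sig s) powr p - PP y s - p * a * sig s / GG y s"
definition "T4f y s = - 2 * al * \<beta> * b * sig s * y^2 * (PP y s - P0) / s"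
definition "T5f y s = mu * ((2 * al * b * \<bar>y\<bar> * sig s * PP y s) powr q
     - (2 * al * b * \<bar>y\<bar> * sig s * P0) powr q)"

lemma FF_GP: "FF y s = GG y s * PP y s" if "s > 0"
  using GG_pos[OF that, of y] powr_add[of "GG y s" 1 "- al - 1"]
  by (simp add: FF_def PP_def)

lemma sig_q: "sig s powr q = tau s" if "s > 0"
proof -
  have "sig s powr q = s powr (- 2 * \<beta> * q)" using that by (simp add: sig_def powr_powr)
  also have "\<dots> = s powr (- 2 * \<beta> - 1)"
  proof -
    have "- 2 * \<beta> * q = - 2 * \<beta> - 1" using betaq by simp
    thus ?thesis by simp
  qed
  also have "\<dots> = tau s" using that by (simp add: tau_def sig_def powr_diff)
  finally show ?thesis .
qed

lemma P0_pos: "P0 > 0" using p3 by (simp add: P0_def)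
lemma PP_pos: "PP y s > 0" if "s > 0" using GG_pos[OF that, of y] by (simp add: PP_def)

lemma R_decomp: "Rform y s = tau s * Mf y + sig s * Bf y s + T2f y s + T3f y s + T4f y s + T5f y s"
  if "s > 0"
proof -
  have absD1: "\<bar>D1 y s\<bar> = 2 * al * b * \<bar>y\<bar> * sig s * PP y s"
    using al_pos b_nonneg sig_pos[OF that] PP_pos[OF that, of y]
    by (simp add: D1_def PP_def abs_mult)
  have gm: "(2 * al * b * \<bar>y\<bar> * sig s * P0) powr q = a powr q * \<bar>y\<bar> powr q * tau s"
  proof -
    have e: "(2 * al * b * \<bar>y\<bar> * sig s * P0) = (a * \<bar>y\<bar>) * sig s" by (simp add: a_eq algebra_simps)
    show ?thesis unfolding e powr_mult sig_q[OF that] ..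
  qed
  have ph: "phi p mu y s = FF y s + a * sig s" by (simp add: phi_eq FF_def)
  have d: "phi p mu y s / (p - 1) = al * (FF y s + a * sig s)" by (simp add: ph al_def)
  have T3e: "phi p mu y s powr p = T3f y s + PP y s + p * a * sig s * (1 / GG y s)"
    by (simp add: T3f_def ph)
  have T5e: "mu * \<bar>D1 y s\<bar> powr q = T5f y s + mu * a powr q * \<bar>y\<bar> powr q * tau s"
    by (simp only: T5f_def absD1 gm) (simp add: algebra_simps)
  have D2e: "D2 y s = - 2 * al * b * sig s * PP y s + T2f y s" by (simp add: D2_def T2f_def PP_def QQ_def)
  have D1e: "D1 y s = - al * PP y s * (2 * b * y * sig s)" by (simp add: D1_def PP_def)
  have Dse: "Ds y s = 2 * al * \<beta> * b * y^2 * sig s * PP y s * (1/s) - 2 * \<beta> * a * sig s * (1/s)"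
    by (simp add: Ds_def PP_def)
  have "Rform y s = (- 2 * al * b * sig s * PP y s + T2f y s) - y / 2 * (- al * PP y s * (2 * b * y * sig s))
     - al * (FF y s + a * sig s) + (T3f y s + PP y s + p * a * sig s * (1 / GG y s))
     - (2 * al * \<beta> * b * y^2 * sig s * PP y s * (1/s) - 2 * \<beta> * a * sig s * (1/s))
     + (T5f y s + mu * a powr q * \<bar>y\<bar> powr q * tau s)"
    unfolding Rform_def d T3e T5e[symmetric] D2e[symmetric] D1e[symmetric] Dse[symmetric] by simp
  also have "\<dots> = (1/s) * sig s * (2 * \<beta> * a - \<beta> * a * y^2) + mu * a powr q * \<bar>y\<bar> powr q * tau s
     + sig s * (- 2 * al * b * (PP y s - P0) + p * a * (1 / GG y s - al)) + T2f y s + T3f y s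
     + (- 2 * al * \<beta> * b * sig s * y^2 * (PP y s - P0) * (1/s)) + T5f y s"
    by (rule alg_id[OF FF_GP[OF that] GG_def a_eq al_p1])
  also have "\<dots> = tau s * Mf y + sig s * Bf y s + T2f y s + T3f y s + T4f y s + T5f y s"
    using that by (simp add: tau_def Mf_def Bf_def T4f_def field_simps)
  finally show ?thesis .
qed


definition "WW y s = b * y^2 * sig s"
lemma WW_nonneg: "WW y s \<ge> 0" if "s > 0" using b_nonneg sig_pos[OF that] by (simp add: WW_def)
lemma GG_WW: "GG y s = (p - 1) + WW y s" by (simp add: GG_def WW_def)

lemma sig_le1: "sig s \<le> 1" if "s \<ge> 1"
  using that beta_bounds by (simp add: sig_def powr_le_one_le ge_one_powr_ge_zero powr_minus divide_simps)

lemma sig_le_inv: "sig s \<le> 1 / s" if "s \<ge> 1"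
proof -
  have "s powr (- 2 * \<beta>) \<le> s powr (- 1)" using that beta_bounds by (intro powr_mono) auto
  thus ?thesis using that by (simp add: sig_def powr_minus divide_simps)
qed

lemma FF_pos: "FF y s > 0" if "s > 0" using GG_pos[OF that, of y] by (simp add: FF_def)
lemma FF_le: "FF y s \<le> \<kappa>" if "s > 0"
  unfolding FF_def kappa_def using GG_ge[OF that, of y] p3 al_pos
  by (simp add: al_def) (intro powr_mono2', auto)

lemma FF_p: "FF y s powr p = PP y s" if "s > 0"
proof -
  have "- al * p = - al - 1" using al_p1 by (simp add: algebra_simps)
  thus ?thesis using GG_pos[OF that, of y] by (simp add: FF_def PP_def powr_powr)
qed
lemma FF_p1: "FF y s powr (p - 1) = 1 / GG y s" if "s > 0"
proof -
  have e: "- al * (p - 1) = - 1" using al_p1 by (simp add: algebra_simps)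
  have "FF y s powr (p - 1) = GG y s powr (- al * (p - 1))" by (simp add: FF_def powr_powr)
  also have "\<dots> = 1 / GG y s" unfolding e using GG_pos[OF that, of y] by (simp add: powr_minus divide_simps)
  finally show ?thesis .
qed

definition "cP = (al + 1) * (p - 1) powr (- al - 2)"
lemma cP_nonneg: "cP \<ge> 0" using al_pos by (simp add: cP_def)
lemma PP_lip: "\<bar>PP y s - P0\<bar> \<le> cP * WW y s" if "s > 0"
proof -
  have H: "\<bar>(p - 1 + WW y s) powr (- (al + 1)) - (p - 1) powr (- (al + 1))\<bar> \<le> (al + 1) * (p - 1) powr (- (al + 1) - 1) * WW y s"
    using powr_lip_neg[of "p - 1" "WW y s" "al + 1"] p3 al_pos WW_nonneg[OF that, of y] by simp
  have e: "- (al + 1) = - al - 1" by simp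
  have e2: "- al - 1 - 1 = - al - 2" by simp
  show ?thesis using H unfolding e e2 PP_def P0_def GG_WW cP_def by assumption
qed

definition "cG = (p - 1) powr (- 2)"
lemma cG_nonneg: "cG \<ge> 0" by (simp add: cG_def)
lemma invG_lip: "\<bar>1 / GG y s - al\<bar> \<le> cG * WW y s" if "s > 0"
proof -
  have "\<bar>(p - 1 + WW y s) powr (- 1) - (p - 1) powr (- 1)\<bar> \<le> 1 * (p - 1) powr (- 1 - 1) * WW y s"
    using powr_lip_neg[of "p - 1" "WW y s" 1] p3 WW_nonneg[OF that, of y] by simp
  moreover have "(p - 1 + WW y s) powr (- 1) = 1 / GG y s" "(p - 1) powr (- 1) = al"
    using GG_pos[OF that, of y] p3 by (auto simp: GG_WW powr_minus al_def divide_simps)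
  ultimately show ?thesis by (simp add: cG_def)
qed

definition "Q0 = (p - 1) powr (- al - 2)"
lemma QQ_le: "QQ y s \<le> Q0" if "s > 0"
  unfolding QQ_def Q0_def using GG_ge[OF that, of y] p3 al_pos by (intro powr_mono2') auto
lemma QQ_nonneg: "QQ y s \<ge> 0" by (simp add: QQ_def)

definition "c5 = (al + 1) * q * (p - 1) powr (- ((al + 1) * q) - 1)"
lemma c5_nonneg: "c5 \<ge> 0" using al_pos q_bounds by (simp add: c5_def)
lemma PPq_lip: "\<bar>PP y s powr q - P0 powr q\<bar> \<le> c5 * WW y s" if "s > 0"
proof -
  have ee: "(- al - 1) * q = - ((al + 1) * q)" by (simp add: algebra_simps)
  have e1: "PP y s powr q = (p - 1 + WW y s) powr (- ((al + 1) * q))"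
    unfolding PP_def powr_powr ee GG_WW ..
  have e2: "P0 powr q = (p - 1) powr (- ((al + 1) * q))"
    unfolding P0_def powr_powr ee ..
  show ?thesis unfolding e1 e2 c5_def
    using powr_lip_neg[of "p - 1" "WW y s" "(al + 1) * q"] p3 al_pos q_bounds WW_nonneg[OF that, of y]
    by (simp add: algebra_simps)
qed

end

context LL begin


lemma asig_le: "a * sig s \<le> a" if "s \<ge> 1"
  using mult_left_le[OF sig_le1[OF that] a_nonneg] .

lemma sB_bd: "\<bar>sig s * Bf y s\<bar> \<le> (2*al*b*cP + p*a*cG) * b * y^2 * (sig s)^2" if "s \<ge> 1"
proof -
  have s0: "s > 0" using that by simp
  have "\<bar>Bf y s\<bar> \<le> \<bar>- 2 * al * b * (PP y s - P0)\<bar> + \<bar>p * a * (1 / GG y s - al)\<bar>"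
    unfolding Bf_def by (rule abs_triangle_ineq)
  also have "\<dots> = 2*al*b*\<bar>PP y s - P0\<bar> + p*a*\<bar>1 / GG y s - al\<bar>"
    using al_pos b_nonneg a_nonneg p3 by (simp add: abs_mult)
  finally have "\<bar>Bf y s\<bar> \<le> 2*al*b*\<bar>PP y s - P0\<bar> + p*a*\<bar>1 / GG y s - al\<bar>" .
  also have "\<dots> \<le> 2*al*b*(cP * WW y s) + p*a*(cG * WW y s)"
    using PP_lip[OF s0] invG_lip[OF s0] al_pos b_nonneg a_nonneg p3
    by (intro add_mono mult_left_mono) auto
  finally have "\<bar>Bf y s\<bar> \<le> (2*al*b*cP + p*a*cG) * WW y s" by (simp add: algebra_simps)
  hence "sig s * \<bar>Bf y s\<bar> \<le> sig s * ((2*al*b*cP + p*a*cG) * WW y s)"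
    using sig_pos[OF s0] by (intro mult_left_mono) auto
  thus ?thesis using sig_pos[OF s0] by (simp add: abs_mult WW_def power2_eq_square algebra_simps)
qed

lemma T2_bd: "\<bar>T2f y s\<bar> \<le> 4*al*(al+1)*b^2*Q0 * y^2 * (sig s)^2" if "s \<ge> 1"
proof -
  have s0: "s > 0" using that by simp
  have "\<bar>T2f y s\<bar> = 4*al*(al+1)*b^2*y^2*(sig s)^2 * QQ y s"
    unfolding T2f_def using al_pos QQ_nonneg[of y s] by (simp add: abs_mult)
  also have "\<dots> \<le> 4*al*(al+1)*b^2*y^2*(sig s)^2 * Q0"
    using QQ_le[OF s0, of y] al_pos by (intro mult_left_mono) auto
  finally show ?thesis by (simp add: algebra_simps)
qed

lemma T3_bd: "\<bar>T3f y s\<bar> \<le> p*(p-1)*(\<kappa>+a) powr (p-2) * a^2 * (sig s)^2" if "s \<ge> 1"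
proof -
  have s0: "s > 0" using that by simp
  have e: "T3f y s = (FF y s + a * sig s) powr p - FF y s powr p - p * FF y s powr (p - 1) * (a * sig s)"
    unfolding T3f_def FF_p[OF s0] FF_p1[OF s0] by simp
  have "\<bar>T3f y s\<bar> \<le> p * (p - 1) * (FF y s + a * sig s) powr (p - 2) * (a * sig s)^2"
    unfolding e using FF_pos[OF s0, of y] a_nonneg sig_pos[OF s0] p3
    by (intro powr_taylor2) auto
  also have "\<dots> \<le> p * (p - 1) * (\<kappa> + a) powr (p - 2) * (a * sig s)^2"
    using FF_pos[OF s0, of y] FF_le[OF s0, of y] a_nonneg sig_pos[OF s0] sig_le1[OF that] p3
    by (intro mult_right_mono mult_left_mono powr_mono2) (auto intro: add_mono asig_le[OF that])
  finally show ?thesis by (simp add: power_mult_distrib algebra_simps)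
qed

lemma T4_bd: "\<bar>T4f y s\<bar> \<le> 2*al*\<beta>*b^2*cP * y^4 * (sig s)^2 / s" if "s \<ge> 1"
proof -
  have s0: "s > 0" using that by simp
  have "\<bar>T4f y s\<bar> = 2*al*\<beta>*b * sig s*y^2 * \<bar>PP y s - P0\<bar> / s"
    unfolding T4f_def using al_pos beta_bounds b_nonneg sig_pos[OF s0] s0 by (simp add: abs_mult)
  also have "\<dots> \<le> 2*al*\<beta>*b * sig s*y^2 * (cP * WW y s) / s"
    using PP_lip[OF s0, of y] al_pos beta_bounds b_nonneg sig_pos[OF s0] s0
    by (intro divide_right_mono mult_left_mono) auto
  finally show ?thesis by (simp add: WW_def power2_eq_square power4_eq_xxxx algebra_simps)
qed

lemma T5_bd: "\<bar>T5f y s\<bar> \<le> mu * (2*al*b) powr q * c5 * b * (\<bar>y\<bar> powr q * y^2) * (sig s)^2 / s" if "s \<ge> 1"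
proof -
  have s0: "s > 0" using that by simp
  have xq: "(2*al*b*\<bar>y\<bar> * sig s) powr q = (2*al*b) powr q * \<bar>y\<bar> powr q * (sig s / s)"
    using sig_q[OF s0] by (simp add: powr_mult tau_def)
  have "T5f y s = mu * (2*al*b*\<bar>y\<bar> * sig s) powr q * (PP y s powr q - P0 powr q)"
    unfolding T5f_def by (simp add: powr_mult algebra_simps)
  hence "\<bar>T5f y s\<bar> = mu * (2*al*b*\<bar>y\<bar> * sig s) powr q * \<bar>PP y s powr q - P0 powr q\<bar>"
    using mu0 by (simp add: abs_mult)
  also have "\<dots> \<le> mu * (2*al*b*\<bar>y\<bar> * sig s) powr q * (c5 * WW y s)"
    using PPq_lip[OF s0, of y] mu0 by (intro mult_left_mono) auto
  also have "\<dots> = mu * (2*al*b) powr q * c5 * b * (\<bar>y\<bar> powr q * y^2) * (sig s)^2 / s"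
    unfolding xq WW_def by (simp add: power2_eq_square algebra_simps)
  finally show ?thesis .
qed


definition "Ef y s = sig s * Bf y s + T2f y s + T3f y s + T4f y s + T5f y s"

lemma R_split: "Rform y s = tau s * Mf y + Ef y s" if "s > 0"
  using R_decomp[OF that] by (simp add: Ef_def)

lemma abs_powr_sq_le: "\<bar>y\<bar> powr q \<le> 1 + y^2"
proof (cases "\<bar>y\<bar> \<le> 1")
  case True
  hence "\<bar>y\<bar> powr q \<le> 1" using q_bounds by (intro powr_le1) auto
  thus ?thesis by (smt (verit) zero_le_power2)
next
  case False
  hence "\<bar>y\<bar> powr q \<le> \<bar>y\<bar> powr 2" using q_bounds by (intro powr_mono) auto
  also have "\<dots> = y^2" using False by (simp add: powr_numeral)
  finally show ?thesis by simp
qed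

lemma E_bound: "\<exists>c1 c2. 0 \<le> c1 \<and> 0 \<le> c2 \<and> (\<forall>s\<ge>1. \<forall>y.
   \<bar>Ef y s\<bar> \<le> (sig s)^2 * (c1 * (1 + y^2) + c2 * (y^4 + \<bar>y\<bar> powr q * y^2) / s))"
proof -
  define k1 where "k1 = (2*al*b*cP + p*a*cG) * b"
  define k2 where "k2 = 4*al*(al+1)*b^2*Q0"
  define k3 where "k3 = p*(p-1)*(\<kappa>+a) powr (p-2) * a^2"
  define k4 where "k4 = 2*al*\<beta>*b^2*cP"
  define k5 where "k5 = mu * (2*al*b) powr q * c5 * b"
  have nn: "0 \<le> k1" "0 \<le> k2" "0 \<le> k3" "0 \<le> k4" "0 \<le> k5"
    unfolding k1_def k2_def k3_def k4_def k5_def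
    using al_pos b_nonneg cP_nonneg a_nonneg p3 cG_nonneg c5_nonneg mu0 beta_bounds
    by (auto simp: Q0_def)
  show ?thesis
  proof (intro exI conjI allI impI)
    show "0 \<le> k1 + k2 + k3" "0 \<le> k4 + k5" using nn by auto
    fix s y :: real assume s: "1 \<le> s"
    have "\<bar>Ef y s\<bar> \<le> \<bar>sig s * Bf y s\<bar> + \<bar>T2f y s\<bar> + \<bar>T3f y s\<bar> + \<bar>T4f y s\<bar> + \<bar>T5f y s\<bar>"
      unfolding Ef_def by linarith
    also have "\<dots> \<le> k1 * y^2 * (sig s)^2 + k2 * y^2 * (sig s)^2 + k3 * (sig s)^2
        + k4 * y^4 * (sig s)^2 / s + k5 * (\<bar>y\<bar> powr q * y^2) * (sig s)^2 / s"
      unfolding k1_def k2_def k3_def k4_def k5_def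
      using sB_bd[OF s, where y=y] T2_bd[OF s, where y=y] T3_bd[OF s, where y=y] T4_bd[OF s, where y=y] T5_bd[OF s, where y=y] by linarith
    also have "\<dots> \<le> (sig s)^2 * ((k1 + k2 + k3) * (1 + y^2) + (k4 + k5) * (y^4 + \<bar>y\<bar> powr q * y^2) / s)"
    proof -
      have a1: "k1 * y^2 + k2 * y^2 + k3 \<le> (k1 + k2 + k3) * (1 + y^2)"
        using nn by (simp add: algebra_simps)
      have a2: "k4 * y^4 + k5 * (\<bar>y\<bar> powr q * y^2) \<le> (k4 + k5) * (y^4 + \<bar>y\<bar> powr q * y^2)"
        using nn by (simp add: algebra_simps)
      have "(sig s)^2 * (k1 * y^2 + k2 * y^2 + k3) \<le> (sig s)^2 * ((k1 + k2 + k3) * (1 + y^2))"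
        using a1 by (intro mult_left_mono) auto
      moreover have "(sig s)^2 * (k4 * y^4 + k5 * (\<bar>y\<bar> powr q * y^2)) / s \<le> (sig s)^2 * ((k4 + k5) * (y^4 + \<bar>y\<bar> powr q * y^2)) / s"
        using a2 s by (intro divide_right_mono mult_left_mono) auto
      ultimately show ?thesis by (simp add: algebra_simps add_divide_distrib)
    qed
    finally show "\<bar>Ef y s\<bar> \<le> (sig s)^2 * ((k1 + k2 + k3) * (1 + y^2) + (k4 + k5) * (y^4 + \<bar>y\<bar> powr q * y^2) / s)" .
  qed
qed

end

context LL begin

lemma R_alt: "Rform y s = - 2 * al * b * sig s * PP y s + T2f y s - al * a * sig s
   + (phi p mu y s powr p - PP y s) - Ds y s + mu * \<bar>D1 y s\<bar> powr q" if "s > 0"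
proof -
  have ph: "phi p mu y s = FF y s + a * sig s" by (simp add: phi_eq FF_def)
  have d: "phi p mu y s / (p - 1) = al * (FF y s + a * sig s)" by (simp add: ph al_def)
  have D2e: "D2 y s = - 2 * al * b * sig s * PP y s + T2f y s" by (simp add: D2_def T2f_def PP_def QQ_def)
  have D1e: "D1 y s = - al * PP y s * (2 * b * y * sig s)" by (simp add: D1_def PP_def)
  have alg: "\<And>(F::real) G P al b y sg T2 pp aa. F = G * P \<Longrightarrow> G = pp - 1 + b * y^2 * sg \<Longrightarrow> al * (pp - 1) = 1 \<Longrightarrow>
     (- 2 * al * b * sg * P + T2) - y / 2 * (- al * P * (2 * b * y * sg)) - al * (F + aa * sg) + P
     = - 2 * al * b * sg * P + T2 - al * aa * sg" by algebra
  have "Rform y s = ((- 2 * al * b * sig s * PP y s + T2f y s) - y / 2 * (- al * PP y s * (2 * b * y * sig s))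
       - al * (FF y s + a * sig s) + PP y s) + (phi p mu y s powr p - PP y s) - Ds y s + mu * \<bar>D1 y s\<bar> powr q"
    unfolding Rform_def d D2e[symmetric] D1e[symmetric] by simp
  also have "\<dots> = - 2 * al * b * sig s * PP y s + T2f y s - al * a * sig s
   + (phi p mu y s powr p - PP y s) - Ds y s + mu * \<bar>D1 y s\<bar> powr q"
    unfolding alg[OF FF_GP[OF that] GG_def al_p1] ..
  finally show ?thesis .
qed

lemma PP_le: "PP y s \<le> P0" if "s > 0"
  unfolding PP_def P0_def using GG_ge[OF that, of y] p3 al_pos by (intro powr_mono2') auto

lemma GG_ge1: "GG y s \<ge> 1" if "s > 0" using GG_ge[OF that, of y] p3 by linarith

lemma WW_le_GG: "WW y s \<le> GG y s" using p3 by (simp add: GG_WW)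

lemma WQ_le: "WW y s * QQ y s \<le> P0" if "s > 0"
proof -
  have "WW y s * QQ y s \<le> GG y s * QQ y s" using WW_le_GG QQ_nonneg by (intro mult_right_mono) auto
  also have "GG y s * QQ y s = PP y s"
  proof -
    have e: "- al - 2 + 1 = - al - 1" by simp
    have "GG y s powr (- al - 2 + 1) = GG y s powr (- al - 2) * GG y s powr 1" by (rule powr_add)
    thus ?thesis unfolding e QQ_def PP_def using GG_pos[OF that, of y] by simp
  qed
  finally show ?thesis using PP_le[OF that, of y] by simp
qed

lemma WP_le: "WW y s * PP y s \<le> \<kappa>" if "s > 0"
proof -
  have "WW y s * PP y s \<le> GG y s * PP y s" using WW_le_GG PP_pos[OF that, of y] by (intro mult_right_mono) auto
  also have "\<dots> = FF y s" using FF_GP[OF that] by simp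
  finally show ?thesis using FF_le[OF that, of y] by simp
qed

lemma D1_abs_bd: "\<bar>D1 y s\<bar> \<le> 2 * al * sqrt b * \<kappa> * sqrt (sig s)" if "s > 0"
proof -
  have W0: "WW y s \<ge> 0" using WW_nonneg[OF that] .
  have sW: "sqrt (WW y s) \<le> GG y s"
  proof -
    have "sqrt (WW y s) \<le> sqrt (GG y s)" using WW_le_GG by simp
    also have "\<dots> \<le> GG y s"
    proof -
      have g1: "sqrt (GG y s) \<ge> 1" using GG_ge1[OF that, of y] by simp
      have "sqrt (GG y s) * 1 \<le> sqrt (GG y s) * sqrt (GG y s)" using g1 by (intro mult_left_mono) auto
      also have "\<dots> = GG y s" using GG_pos[OF that, of y] by simp
      finally show ?thesis by simp
    qed
    finally show ?thesis .
  qed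
  have bys: "b * \<bar>y\<bar> * sig s = sqrt (b * sig s) * sqrt (WW y s)"
    using b_nonneg sig_pos[OF that] unfolding WW_def
    by (simp add: real_sqrt_mult real_sqrt_abs[symmetric] del: real_sqrt_abs)
      (smt (verit, best) mult.commute mult.left_commute real_sqrt_mult_self)
  have "\<bar>D1 y s\<bar> = 2 * al * (b * \<bar>y\<bar> * sig s) * PP y s"
    using al_pos b_nonneg sig_pos[OF that] PP_pos[OF that, of y] by (simp add: D1_def PP_def abs_mult)
  also have "\<dots> = 2 * al * sqrt (b * sig s) * (sqrt (WW y s) * PP y s)" unfolding bys by simp
  also have "\<dots> \<le> 2 * al * sqrt (b * sig s) * (GG y s * PP y s)"
    using sW al_pos PP_pos[OF that, of y] b_nonneg sig_pos[OF that] by (intro mult_left_mono mult_right_mono) auto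
  also have "GG y s * PP y s = FF y s" using FF_GP[OF that] by simp
  also have "2 * al * sqrt (b * sig s) * FF y s \<le> 2 * al * sqrt (b * sig s) * \<kappa>"
    using FF_le[OF that, of y] al_pos b_nonneg sig_pos[OF that] by (intro mult_left_mono) auto
  finally show ?thesis by (simp add: real_sqrt_mult algebra_simps)
qed

lemma R_global: "\<exists>CR. 0 \<le> CR \<and> (\<forall>s\<ge>1. \<forall>y. \<bar>Rform y s\<bar> \<le> CR / s)"
proof -
  define k where "k = 2 * al * b * P0 + 4*al*(al+1)*b*P0 + al * a + a * p * (\<kappa> + a) powr (p - 1)
     + 2 * al * \<beta> * \<kappa> + 2 * \<beta> * a + mu * (2 * al * sqrt b * \<kappa>) powr q"
  show ?thesis
  proof (intro exI conjI allI impI)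
    show "0 \<le> k" unfolding k_def using al_pos b_nonneg P0_pos a_nonneg p3 kappa_pos beta_bounds mu0
      by (intro add_nonneg_nonneg mult_nonneg_nonneg) auto
    fix s y :: real assume s: "1 \<le> s"
    hence s0: "s > 0" by simp
    have sg: "sig s \<le> 1 / s" "sig s > 0" using sig_le_inv[OF s] sig_pos[OF s0] by auto
    have t1: "\<bar>- 2 * al * b * sig s * PP y s\<bar> \<le> 2 * al * b * P0 * (1/s)"
    proof -
      have "\<bar>- 2 * al * b * sig s * PP y s\<bar> = 2 * al * b * (sig s * PP y s)"
        using al_pos b_nonneg sg PP_pos[OF s0, of y] by (simp add: abs_mult)
      also have "\<dots> \<le> 2 * al * b * ((1/s) * P0)"
        using al_pos b_nonneg sg PP_pos[OF s0, of y] PP_le[OF s0, of y] s0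
        by (intro mult_left_mono mult_mono) auto
      finally show ?thesis by simp
    qed
    have t2: "\<bar>T2f y s\<bar> \<le> 4*al*(al+1)*b*P0 * (1/s)"
    proof -
      have e: "T2f y s = 4*al*(al+1)*b * sig s * (WW y s * QQ y s)"
        unfolding T2f_def WW_def by (simp add: power2_eq_square algebra_simps)
      have "0 \<le> 4*al*(al+1)*b * sig s * (WW y s * QQ y s)"
        using al_pos b_nonneg sg QQ_nonneg[of y s] WW_nonneg[OF s0, of y] by simp
      hence "\<bar>T2f y s\<bar> = 4*al*(al+1)*b * sig s * (WW y s * QQ y s)" unfolding e by simp
      also have "\<dots> \<le> 4*al*(al+1)*b * (1/s) * P0"
        using al_pos b_nonneg sg WQ_le[OF s0, of y] WW_nonneg[OF s0, of y] QQ_nonneg[of y s] s0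
        by (intro mult_left_mono mult_mono) auto
      finally show ?thesis by simp
    qed
    have t3: "\<bar>al * a * sig s\<bar> \<le> al * a * (1/s)"
    proof -
      have "al * a * sig s \<le> al * a * (1/s)" using al_pos a_nonneg sg by (intro mult_left_mono) auto
      thus ?thesis using al_pos a_nonneg sg by (simp add: abs_mult)
    qed
    have t4: "\<bar>phi p mu y s powr p - PP y s\<bar> \<le> a * p * (\<kappa> + a) powr (p - 1) * (1/s)"
    proof -
      have ph: "phi p mu y s = FF y s + a * sig s" by (simp add: phi_eq FF_def)
      have H: "0 \<le> (FF y s + a * sig s) powr p - FF y s powr p \<and> (FF y s + a * sig s) powr p - FF y s powr p
          \<le> (FF y s + a * sig s - FF y s) * p * (FF y s + a * sig s) powr (p - 1)"
        using FF_pos[OF s0, of y] a_nonneg sg p3 by (intro powr_diff_up) auto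
      have "(FF y s + a * sig s) powr (p - 1) \<le> (\<kappa> + a) powr (p - 1)"
        using FF_pos[OF s0, of y] FF_le[OF s0, of y] a_nonneg sg p3 asig_le[OF s]
        by (intro powr_mono2) auto
      hence "(a * sig s) * p * (FF y s + a * sig s) powr (p - 1) \<le> (a * (1/s)) * p * (\<kappa> + a) powr (p - 1)"
        using a_nonneg sg p3 s0 by (intro mult_mono) (auto intro: mult_left_mono)
      thus ?thesis using H unfolding ph FF_p[OF s0] by (simp add: algebra_simps)
    qed
    have t5: "\<bar>Ds y s\<bar> \<le> (2 * al * \<beta> * \<kappa> + 2 * \<beta> * a) * (1/s)"
    proof -
      have "Ds y s = (2 * al * \<beta> * (WW y s * PP y s) - 2 * \<beta> * a * sig s) / s"
        unfolding Ds_def WW_def PP_def by (simp add: diff_divide_distrib algebra_simps)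
      moreover have "\<bar>2 * al * \<beta> * (WW y s * PP y s) - 2 * \<beta> * a * sig s\<bar> \<le> 2 * al * \<beta> * \<kappa> + 2 * \<beta> * a"
      proof -
        have X1: "0 \<le> 2 * al * \<beta> * (WW y s * PP y s)"
          using WW_nonneg[OF s0, of y] PP_pos[OF s0, of y] al_pos beta_bounds by simp
        have X2: "2 * al * \<beta> * (WW y s * PP y s) \<le> 2 * al * \<beta> * \<kappa>"
          using WP_le[OF s0, of y] al_pos beta_bounds by (intro mult_left_mono) auto
        have Y1: "0 \<le> 2 * \<beta> * a * sig s" using beta_bounds a_nonneg sg by simp
        have Y2: "2 * \<beta> * a * sig s \<le> 2 * \<beta> * a"
          using asig_le[OF s] beta_bounds by (simp add: mult.assoc)
        show ?thesis using X1 X2 Y1 Y2 by (simp only: abs_le_iff) linarith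
      qed
      ultimately show ?thesis using s0 by (simp add: abs_divide divide_right_mono)
    qed
    have t6: "mu * \<bar>D1 y s\<bar> powr q \<le> mu * (2 * al * sqrt b * \<kappa>) powr q * (1/s)"
    proof -
      have "\<bar>D1 y s\<bar> powr q \<le> (2 * al * sqrt b * \<kappa> * sqrt (sig s)) powr q"
        using D1_abs_bd[OF s0, of y] q_bounds by (intro powr_mono2) auto
      also have "\<dots> = (2 * al * sqrt b * \<kappa>) powr q * sqrt (sig s) powr q" by (simp add: powr_mult)
      also have "sqrt (sig s) powr q = s powr (- \<beta> * q)"
        using s0 by (simp add: sig_def powr_half_sqrt[symmetric] powr_powr)
      also have "s powr (- \<beta> * q) \<le> s powr (- 1)" using s betaq1 by (intro powr_mono) auto
      also have "s powr (- 1) = 1 / s" using s0 by (simp add: powr_minus divide_simps)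
      finally have "\<bar>D1 y s\<bar> powr q \<le> (2 * al * sqrt b * \<kappa>) powr q * (1 / s)"
        by (simp add: mult_left_mono)
      hence "mu * \<bar>D1 y s\<bar> powr q \<le> mu * ((2 * al * sqrt b * \<kappa>) powr q * (1 / s))"
        using mu0 by (intro mult_left_mono) auto
      thus ?thesis by (simp add: mult.assoc)
    qed
    have "\<bar>Rform y s\<bar> \<le> \<bar>- 2 * al * b * sig s * PP y s\<bar> + \<bar>T2f y s\<bar> + \<bar>al * a * sig s\<bar>
        + \<bar>phi p mu y s powr p - PP y s\<bar> + \<bar>Ds y s\<bar> + mu * \<bar>D1 y s\<bar> powr q"
    proof -
      have tri: "\<And>A B C D E F::real. 0 \<le> F \<Longrightarrow> \<bar>A + B - C + D - E + F\<bar> \<le> \<bar>A\<bar> + \<bar>B\<bar> + \<bar>C\<bar> + \<bar>D\<bar> + \<bar>E\<bar> + F"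
        by (smt (verit))
      have "0 \<le> mu * \<bar>D1 y s\<bar> powr q" using mu0 by simp
      from tri[OF this, of "- 2 * al * b * sig s * PP y s" "T2f y s" "al * a * sig s" "phi p mu y s powr p - PP y s" "Ds y s"]
      show ?thesis unfolding R_alt[OF s0] .
    qed
    also have "\<dots> \<le> k * (1/s)"
    proof -
      have "k * (1/s) = 2 * al * b * P0 * (1/s) + 4*al*(al+1)*b*P0 * (1/s) + al * a * (1/s)
         + a * p * (\<kappa> + a) powr (p - 1) * (1/s) + (2 * al * \<beta> * \<kappa> + 2 * \<beta> * a) * (1/s)
         + mu * (2 * al * sqrt b * \<kappa>) powr q * (1/s)"
        unfolding k_def by (simp only: distrib_right)
      thus ?thesis using t1 t2 t3 t4 t5 t6 by linarith
    qed
    finally show "\<bar>Rform y s\<bar> \<le> k / s" by simp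
  qed
qed


lemma V_bounds: "\<exists>CV. 0 \<le> CV \<and> (\<forall>s\<ge>1. \<forall>y. \<bar>Vpot p mu y s\<bar> \<le> CV \<and>
     \<bar>Vpot p mu y s\<bar> \<le> CV * (1 + y^2) / s powr (2 * \<beta>))"
proof -
  define k1 where "k1 = p * (\<kappa> + a) powr (p - 1) + p * al"
  define k2 where "k2 = p * (a * (p - 1) * (\<kappa> + a) powr (p - 2) + cG * b)"
  have k1: "0 \<le> k1" unfolding k1_def using p3 al_pos by simp
  have k2: "0 \<le> k2" unfolding k2_def using p3 a_nonneg cG_nonneg b_nonneg by simp
  show ?thesis
  proof (intro exI conjI allI impI)
    show "0 \<le> k1 + k2" using k1 k2 by simp
    fix s y :: real assume s: "1 \<le> s"
    hence s0: "s > 0" by simp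
    have ph: "phi p mu y s = FF y s + a * sig s" by (simp add: phi_eq FF_def)
    have Ve: "Vpot p mu y s = p * (phi p mu y s powr (p - 1) - al)"
      by (simp add: Vpot_def al_def algebra_simps)
    have H: "0 \<le> (FF y s + a * sig s) powr (p - 1) - FF y s powr (p - 1) \<and>
       (FF y s + a * sig s) powr (p - 1) - FF y s powr (p - 1) \<le> (FF y s + a * sig s - FF y s) * (p - 1) * (FF y s + a * sig s) powr (p - 1 - 1)"
      using FF_pos[OF s0, of y] a_nonneg sig_pos[OF s0] p3 by (intro powr_diff_up) auto
    have pm: "(FF y s + a * sig s) powr (p - 1 - 1) \<le> (\<kappa> + a) powr (p - 2)"
    proof -
      have "(FF y s + a * sig s) powr (p - 2) \<le> (\<kappa> + a) powr (p - 2)"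
        using FF_pos[OF s0, of y] FF_le[OF s0, of y] a_nonneg sig_pos[OF s0] p3 asig_le[OF s]
        by (intro powr_mono2) auto
      moreover have "p - 1 - 1 = p - 2" by simp
      ultimately show ?thesis by simp
    qed
    have A: "\<bar>phi p mu y s powr (p - 1) - FF y s powr (p - 1)\<bar> \<le> a * (p - 1) * (\<kappa> + a) powr (p - 2) * sig s"
    proof -
      have "(a * sig s) * (p - 1) * (FF y s + a * sig s) powr (p - 1 - 1) \<le> (a * sig s) * (p - 1) * (\<kappa> + a) powr (p - 2)"
        using pm a_nonneg sig_pos[OF s0] p3 by (intro mult_left_mono) auto
      thus ?thesis using H unfolding ph by (simp add: algebra_simps)
    qed
    have B: "\<bar>FF y s powr (p - 1) - al\<bar> \<le> cG * b * y^2 * sig s"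
      using invG_lip[OF s0, of y] unfolding FF_p1[OF s0] by (simp add: WW_def algebra_simps)
    have "\<bar>Vpot p mu y s\<bar> \<le> p * (a * (p - 1) * (\<kappa> + a) powr (p - 2) * sig s + cG * b * y^2 * sig s)"
      unfolding Ve using A B p3 by (simp add: abs_mult)
    also have "\<dots> \<le> k2 * (1 + y^2) * sig s"
    proof -
      have "a * (p - 1) * (\<kappa> + a) powr (p - 2) + cG * b * y^2 \<le> (a * (p - 1) * (\<kappa> + a) powr (p - 2) + cG * b) * (1 + y^2)"
      proof -
        define A where "A = a * (p - 1) * (\<kappa> + a) powr (p - 2)"
        have "0 \<le> A" unfolding A_def using a_nonneg p3 by simp
        hence "0 \<le> A * y^2" "0 \<le> cG * b" using cG_nonneg b_nonneg by auto
        moreover have "(A + cG * b) * (1 + y^2) = A + cG * b * y^2 + (A * y^2 + cG * b)" by (simp add: algebra_simps)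
        ultimately show ?thesis unfolding A_def[symmetric] by linarith
      qed
      hence "p * ((a * (p - 1) * (\<kappa> + a) powr (p - 2) + cG * b * y^2) * sig s) \<le> p * ((a * (p - 1) * (\<kappa> + a) powr (p - 2) + cG * b) * (1 + y^2) * sig s)"
        using p3 sig_pos[OF s0] by (intro mult_left_mono mult_right_mono) auto
      thus ?thesis unfolding k2_def by (simp add: algebra_simps)
    qed
    also have "\<dots> \<le> (k1 + k2) * (1 + y^2) * sig s"
      using k1 sig_pos[OF s0] by (intro mult_right_mono) auto
    also have "sig s = 1 / s powr (2 * \<beta>)" by (simp add: sig_def powr_minus divide_simps)
    finally show "\<bar>Vpot p mu y s\<bar> \<le> (k1 + k2) * (1 + y^2) / s powr (2 * \<beta>)" by simp
    have "0 \<le> phi p mu y s powr (p - 1)" by simp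
    moreover have "phi p mu y s powr (p - 1) \<le> (\<kappa> + a) powr (p - 1)"
      unfolding ph using FF_pos[OF s0, of y] FF_le[OF s0, of y] a_nonneg sig_pos[OF s0] p3 asig_le[OF s]
      by (intro powr_mono2) auto
    ultimately have "\<bar>phi p mu y s powr (p - 1) - al\<bar> \<le> (\<kappa> + a) powr (p - 1) + al"
      using al_pos by (simp only: abs_le_iff) linarith
    hence "p * \<bar>phi p mu y s powr (p - 1) - al\<bar> \<le> p * ((\<kappa> + a) powr (p - 1) + al)"
      using p3 by (intro mult_left_mono) auto
    moreover have "\<bar>Vpot p mu y s\<bar> = p * \<bar>phi p mu y s powr (p - 1) - al\<bar>"
      unfolding Ve using p3 by (simp add: abs_mult)
    ultimately have "\<bar>Vpot p mu y s\<bar> \<le> k1"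
      unfolding k1_def by (simp add: algebra_simps)
    thus "\<bar>Vpot p mu y s\<bar> \<le> k1 + k2" using k2 by simp
  qed
qed

end

lemma rho_nd: "rho y = normal_density 0 (sqrt 2) y"
  by (simp add: rho_def normal_density_def real_sqrt_mult)

lemma rho_pos: "rho y > 0" by (simp add: rho_def)

lemma int_rho_pow: "integrable lborel (\<lambda>y. rho y * y ^ k)"
  using integrable_normal_moment[where \<mu>=0 and \<sigma>="sqrt 2" and k=k] by (simp add: rho_nd[abs_def])

lemma int_rho: "integrable lborel rho"
  using int_rho_pow[of 0] by simp

lemma rho_moment_even: "(LINT y|lborel. rho y * y ^ (2 * k)) = fact (2 * k) / (1 * fact k)"
  using integral_normal_moment_even[of "sqrt 2" 0 k] by (simp add: rho_nd[abs_def])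

lemma rho_int1: "(LINT y|lborel. rho y) = 1"
  using integral_normal_density[of 0 "sqrt 2"] by (simp add: rho_nd[abs_def])
lemma rho_int2: "(LINT y|lborel. rho y * y^2) = 2"
  using rho_moment_even[of 1] by simp
lemma rho_int4: "(LINT y|lborel. rho y * y^4) = 12"
  using rho_moment_even[of 2] by (simp add: fact_numeral)

definition "UU y = (1 + y^6) * rho y"
lemma int_UU: "integrable lborel UU"
proof -
  have "UU = (\<lambda>y. rho y + rho y * y^6)" by (auto simp: UU_def algebra_simps)
  thus ?thesis using Bochner_Integration.integrable_add[OF int_rho int_rho_pow[of 6]] by simp
qed
lemma UU_nonneg: "UU y \<ge> 0" using rho_pos[of y] by (simp add: UU_def)

lemma integrable_by_UU:
  fixes f :: "real \<Rightarrow> real"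
  assumes "f \<in> borel_measurable lborel" "\<And>y. \<bar>f y\<bar> \<le> c * UU y"
  shows "integrable lborel f"
proof (rule Bochner_Integration.integrable_bound[of _ "\<lambda>y. c * UU y"])
  show "integrable lborel (\<lambda>y. c * UU y)" using int_UU by simp
  show "f \<in> borel_measurable lborel" by fact
  show "AE y in lborel. norm (f y) \<le> norm (c * UU y)"
    using assms(2) by (auto intro!: AE_I2 order_trans[OF _ abs_ge_self])
qed

lemma cont_absq: "continuous_on UNIV (\<lambda>y::real. \<bar>y\<bar> powr q)" if "q > 0"
  using that by (intro continuous_on_powr') (auto intro: continuous_intros)

lemma absq_le: "\<bar>y\<bar> powr q \<le> 1 + \<bar>y\<bar> ^ n" if "0 \<le> q" "q \<le> real n"
proof (cases "\<bar>y\<bar> \<le> 1")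
  case True
  hence "\<bar>y\<bar> powr q \<le> 1" using that by (intro powr_le1) auto
  thus ?thesis by (smt (verit) zero_le_power abs_ge_zero)
next
  case False
  hence "\<bar>y\<bar> powr q \<le> \<bar>y\<bar> powr (real n)" using that by (intro powr_mono) auto
  also have "\<dots> = \<bar>y\<bar> ^ n" using False by (simp add: powr_realpow)
  finally show ?thesis by simp
qed


lemma pow_le_poly: "\<bar>y\<bar> ^ m \<le> 1 + \<bar>y\<bar> ^ n" if "m \<le> n" for y :: real
proof (cases "\<bar>y\<bar> \<le> 1")
  case True
  hence "\<bar>y\<bar> ^ m \<le> 1" by (simp add: power_le_one)
  thus ?thesis by (smt (verit) zero_le_power abs_ge_zero)
next
  case False
  hence "\<bar>y\<bar> ^ m \<le> \<bar>y\<bar> ^ n" using that by (intro power_increasing) auto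
  thus ?thesis by simp
qed

lemma absq_sq: "\<bar>y\<bar> powr q \<le> 1 + y^2" if "0 \<le> q" "q \<le> 2" for y q :: real
  using absq_le[of q 2 y] that by simp

lemma hq_deriv: "((\<lambda>y. y * \<bar>y\<bar> powr q) has_real_derivative (q + 1) * \<bar>y\<bar> powr q) (at y)" if q: "q > 0"
proof (cases "y = 0")
  case False
  have eq: "(\<lambda>y::real. y * \<bar>y\<bar> powr q) = (\<lambda>y. y * (y^2) powr (q/2))"
  proof
    fix y :: real
    have e: "\<bar>y\<bar> powr 2 = y^2" by (simp add: powr_numeral)
    have "(y^2) powr (q/2) = (\<bar>y\<bar> powr 2) powr (q/2)" by (simp only: e)
    also have "\<dots> = \<bar>y\<bar> powr q" unfolding powr_powr by simp
    finally show "y * \<bar>y\<bar> powr q = y * (y^2) powr (q/2)" by simp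
  qed
  have "((\<lambda>y. y * (y^2) powr (q/2)) has_real_derivative
      1 * (y^2) powr (q/2) + y * ((q/2) * (y^2) powr (q/2 - 1) * (2 * y))) (at y)"
  proof -
    have d0: "((\<lambda>y::real. y^2) has_real_derivative 2 * y) (at y)" by (auto intro!: derivative_eq_intros)
    have d1: "((\<lambda>y. (y^2) powr (q/2)) has_real_derivative (q/2) * (y^2) powr (q/2 - 1) * (2*y)) (at y)"
      using DERIV_fun_powr[OF d0, of "q/2"] False by simp
    from DERIV_mult[OF DERIV_ident d1] show ?thesis by (simp add: algebra_simps)
  qed
  moreover have "1 * (y^2) powr (q/2) + y * ((q/2) * (y^2) powr (q/2 - 1) * (2 * y)) = (q + 1) * \<bar>y\<bar> powr q"
  proof -
    have y2: "y^2 > 0" using False by simp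
    have "y * ((q/2) * (y^2) powr (q/2 - 1) * (2 * y)) = q * ((y^2) powr 1 * (y^2) powr (q/2 - 1))"
      using y2 by (simp add: power2_eq_square algebra_simps)
    also have "(y^2) powr 1 * (y^2) powr (q/2 - 1) = (y^2) powr (q/2)"
      using powr_add[of "y^2" 1 "q/2 - 1"] by simp
    finally have "y * ((q/2) * (y^2) powr (q/2 - 1) * (2 * y)) = q * (y^2) powr (q/2)" .
    moreover have "(y^2) powr (q/2) = \<bar>y\<bar> powr q" using fun_cong[OF eq, of y] False by simp
    ultimately show ?thesis by (simp add: algebra_simps)
  qed
  ultimately show ?thesis unfolding eq by simp
next
  case True
  have c: "isCont (\<lambda>y::real. \<bar>y\<bar> powr q) 0"
    using cont_absq[OF q] by (simp add: continuous_on_eq_continuous_at)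
  hence "((\<lambda>x::real. \<bar>x\<bar> powr q) \<longlongrightarrow> 0) (at 0)"
    using q by (simp add: isCont_def)
  moreover have "\<forall>\<^sub>F x in at (0::real). \<bar>x\<bar> powr q = (x * \<bar>x\<bar> powr q - 0 * \<bar>0\<bar> powr q) / (x - 0)"
    by (auto simp: eventually_at_filter)
  ultimately have "((\<lambda>x::real. (x * \<bar>x\<bar> powr q - 0 * \<bar>0\<bar> powr q) / (x - 0)) \<longlongrightarrow> 0) (at 0)"
    by (rule Lim_transform_eventually)
  thus ?thesis unfolding True has_field_derivative_iff using q by simp
qed

lemma rho_deriv: "(rho has_real_derivative (- y / 2 * rho y)) (at y)"
  unfolding rho_def[abs_def] by (auto intro!: derivative_eq_intros simp: field_simps)

lemma rho_tendsto_poly: "((\<lambda>y. (1 + y^4) * rho y) \<longlongrightarrow> 0) at_top"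
   "((\<lambda>y. (1 + y^4) * rho y) \<longlongrightarrow> 0) at_bot"
  unfolding rho_def by real_asymp+


lemma poly6: "y^2 \<le> 1 + y^6" "y^4 \<le> 1 + y^6" "\<bar>y\<bar> \<le> 1 + y^6" "\<bar>y\<bar>^3 \<le> 1 + y^6" for y :: real
  using pow_le_poly[of 2 6 y] pow_le_poly[of 4 6 y] pow_le_poly[of 1 6 y] pow_le_poly[of 3 6 y]
  by (simp_all add: power_even_abs_numeral)

lemma meas_absq: "(\<lambda>y::real. \<bar>y\<bar> powr q) \<in> borel_measurable lborel" by measurable
lemma meas_rho: "rho \<in> borel_measurable lborel" unfolding rho_def[abs_def] by measurable

lemma int_absq: "integrable lborel (\<lambda>y. \<bar>y\<bar> powr q * rho y)" if "0 \<le> q" "q \<le> 2"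
proof (rule integrable_by_UU[where c=2])
  show "(\<lambda>y. \<bar>y\<bar> powr q * rho y) \<in> borel_measurable lborel" using meas_absq meas_rho by measurable
  fix y :: real
  have "0 \<le> y^6" using zero_le_power2[of "y^3"] by (simp add: power_mult[symmetric])
  hence "\<bar>y\<bar> powr q \<le> 2 * (1 + y^6)" using absq_sq[OF that, of y] poly6(1)[of y] by (smt (verit))
  thus "\<bar>\<bar>y\<bar> powr q * rho y\<bar> \<le> 2 * UU y" using rho_pos[of y]
    by (simp add: UU_def abs_mult mult_right_mono mult.assoc)
qed

lemma int_absq2: "integrable lborel (\<lambda>y. y^2 * \<bar>y\<bar> powr q * rho y)" if "0 \<le> q" "q \<le> 2"
proof (rule integrable_by_UU[where c=3])
  show "(\<lambda>y. y^2 * \<bar>y\<bar> powr q * rho y) \<in> borel_measurable lborel" using meas_absq meas_rho by measurable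
  fix y :: real
  have "y^2 * \<bar>y\<bar> powr q \<le> y^2 * (1 + y^2)" using absq_sq[OF that, of y] by (intro mult_left_mono) auto
  also have "\<dots> = y^2 + y^4" by (simp add: algebra_simps power2_eq_square power4_eq_xxxx)
  also have "\<dots> \<le> 3 * (1 + y^6)" using poly6[of y] by simp
  finally have "y^2 * \<bar>y\<bar> powr q \<le> 3 * (1 + y^6)" .
  thus "\<bar>y^2 * \<bar>y\<bar> powr q * rho y\<bar> \<le> 3 * UU y" using rho_pos[of y]
    by (simp add: UU_def abs_mult mult_right_mono mult.assoc)
qed

lemma ibp_moment:
  assumes q: "0 < q" "q \<le> 2"
  shows "(LINT y|lborel. y^2 * \<bar>y\<bar> powr q * rho y) = 2 * (q + 1) * (LINT y|lborel. \<bar>y\<bar> powr q * rho y)"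
proof -
  define F where "F y = y * \<bar>y\<bar> powr q * rho y" for y
  define f where "f y = (q + 1) * (\<bar>y\<bar> powr q * rho y) - (1/2) * (y^2 * \<bar>y\<bar> powr q * rho y)" for y
  have dF: "(F has_real_derivative f y) (at y)" for y
  proof -
    have "(F has_real_derivative (q + 1) * \<bar>y\<bar> powr q * rho y + (- y / 2 * rho y) * (y * \<bar>y\<bar> powr q)) (at y)"
      unfolding F_def[abs_def] using DERIV_mult[OF hq_deriv[OF q(1)] rho_deriv] by simp
    thus ?thesis unfolding f_def by (simp add: power2_eq_square algebra_simps)
  qed
  have cf: "isCont f y" for y
  proof -
    have cA: "continuous_on UNIV (\<lambda>y::real. \<bar>y\<bar> powr q)" using cont_absq[OF q(1)] .
    have cR: "continuous_on UNIV rho" unfolding rho_def[abs_def] by (intro continuous_intros) auto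
    have "continuous_on UNIV (\<lambda>y. (q + 1) * (\<bar>y\<bar> powr q * rho y) - (1/2) * (y^2 * \<bar>y\<bar> powr q * rho y))"
      by (intro continuous_on_diff continuous_on_mult continuous_on_const cA cR continuous_on_power continuous_on_id)
    hence "continuous_on UNIV f" unfolding f_def[abs_def] .
    thus ?thesis by (simp add: continuous_on_eq_continuous_at)
  qed
  have i1: "integrable lborel (\<lambda>y. \<bar>y\<bar> powr q * rho y)" using int_absq q by simp
  have i2: "integrable lborel (\<lambda>y. y^2 * \<bar>y\<bar> powr q * rho y)" using int_absq2 q by simp
  have intf: "integrable lborel f" unfolding f_def using i1 i2 by simp
  have Fbd: "\<bar>F y\<bar> \<le> 2 * ((1 + y^4) * rho y)" for y
  proof -
    have "\<bar>y\<bar> * \<bar>y\<bar> powr q \<le> \<bar>y\<bar> * (1 + y^2)" using absq_sq[of q y] q by (intro mult_left_mono) auto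
    also have "\<dots> = \<bar>y\<bar> + \<bar>y\<bar>^3" by (simp add: algebra_simps power2_eq_square power3_eq_cube)
    also have "\<dots> \<le> 2 * (1 + y^4)" using pow_le_poly[of 1 4 y] pow_le_poly[of 3 4 y]
      by (simp add: power_even_abs_numeral)
    finally have "\<bar>y\<bar> * \<bar>y\<bar> powr q \<le> 2 * (1 + y^4)" .
    thus ?thesis unfolding F_def using rho_pos[of y] by (simp add: abs_mult mult_right_mono mult.assoc)
  qed
  have lim: "(F \<longlongrightarrow> 0) at_top" "(F \<longlongrightarrow> 0) at_bot"
    using Lim_null_comparison[of F "\<lambda>y. 2 * ((1 + y^4) * rho y)"] Fbd
      tendsto_mult_right_zero[OF rho_tendsto_poly(1), of 2] tendsto_mult_right_zero[OF rho_tendsto_poly(2), of 2]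
    by (auto intro: always_eventually simp: mult.commute)
  have "(LBINT x=-\<infinity>..\<infinity>. f x) = 0 - 0"
  proof (rule interval_integral_FTC_integrable)
    show "- \<infinity> < (\<infinity>::ereal)" by simp
    show "(F has_vector_derivative f x) (at x)" for x
      using dF[of x] by (simp add: has_real_derivative_iff_has_vector_derivative)
    show "isCont f x" for x by (rule cf)
    show "set_integrable lborel (einterval (- \<infinity>) \<infinity>) f"
      using intf by (simp add: einterval_eq_UNIV set_integrable_def)
    show "((F \<circ> real_of_ereal) \<longlongrightarrow> 0) (at_right (- \<infinity>))" using lim by (simp add: ereal_tendsto_simps1)
    show "((F \<circ> real_of_ereal) \<longlongrightarrow> 0) (at_left \<infinity>)" using lim by (simp add: ereal_tendsto_simps1)
  qed
  hence "(LINT y|lborel. f y) = 0"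
    by (simp add: interval_lebesgue_integral_def einterval_eq_UNIV set_lebesgue_integral_def)
  hence "(q + 1) * (LINT y|lborel. \<bar>y\<bar> powr q * rho y) - (1/2) * (LINT y|lborel. y^2 * \<bar>y\<bar> powr q * rho y) = 0"
    unfolding f_def using i1 i2 by simp
  thus ?thesis by (simp add: algebra_simps)
qed

context LL begin

definition "JJ = (LINT y|lborel. \<bar>y\<bar> powr q * rho y)"

lemma JJ_ge: "JJ \<ge> 1/4"
proof -
  have q: "0 \<le> q" "q \<le> 2" using q_bounds by auto
  have le: "rho y * y^2 / 2 - rho y * y^4 / 16 \<le> \<bar>y\<bar> powr q * rho y" for y
  proof -
    have "y^2 / 2 - y^4 / 16 \<le> \<bar>y\<bar> powr q"
    proof (cases "\<bar>y\<bar> \<le> 1")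
      case True
      have "\<bar>y\<bar> powr 2 \<le> \<bar>y\<bar> powr q" using True q_bounds by (intro powr_mono') auto
      hence "y^2 \<le> \<bar>y\<bar> powr q" by (simp add: powr_numeral)
      moreover have "0 \<le> y^4" "0 \<le> y^2" by simp_all
      ultimately show ?thesis by linarith
    next
      case False
      have "1 \<le> \<bar>y\<bar> powr q" using False q_bounds by (intro ge_one_powr_ge_zero) auto
      moreover have "y^2 / 2 - y^4 / 16 \<le> 1"
      proof -
        have "0 \<le> (y^2 - 4)^2" by simp
        thus ?thesis by (simp add: power2_eq_square power4_eq_xxxx algebra_simps)
      qed
      ultimately show ?thesis by simp
    qed
    thus ?thesis using rho_pos[of y] by (smt (verit) mult_right_mono left_diff_distrib mult.commute times_divide_eq_left)
  qed
  have "(LINT y|lborel. rho y * y^2 / 2 - rho y * y^4 / 16) = 2/2 - 12/16"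
    using int_rho_pow[of 2] int_rho_pow[of 4] by (simp add: rho_int2 rho_int4)
  moreover have "(LINT y|lborel. rho y * y^2 / 2 - rho y * y^4 / 16) \<le> JJ"
    unfolding JJ_def using int_rho_pow[of 2] int_rho_pow[of 4] int_absq[OF q] le
    by (intro integral_mono) auto
  ultimately show ?thesis by simp
qed

definition "II = (LINT y|lborel. \<bar>y\<bar> powr q * exp (- (y^2) / 4))"
lemma II_eq: "II = sqrt (4 * pi) * JJ"
proof -
  have "(\<lambda>y. \<bar>y\<bar> powr q * exp (- (y^2) / 4)) = (\<lambda>y. sqrt (4 * pi) * (\<bar>y\<bar> powr q * rho y))"
    by (auto simp: rho_def)
  thus ?thesis unfolding II_def JJ_def by simp
qed

definition "XX = sqrt (4 * pi) * (p + 1)^2 / (p * II)"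

lemma XX_pos: "XX > 0" using p3 JJ_ge by (simp add: XX_def II_eq)

lemma b_eq: "b = 1/2 * (p - 1) powr ((p - 2) / (p - 1)) * XX powr ((p + 1) / (p - 1)) * mu powr (- (p + 1) / (p - 1))"
  by (simp add: bconst_def XX_def II_def)

lemma a_formula: "a = (XX / ((p - 1) * mu)) powr ((p + 1) / (p - 1))"
proof -
  define e where "e = (p + 1) / (p - 1)"
  have pm: "p - 1 > 0" using p3 by simp
  have ex: "(p - 2) / (p - 1) + (- 1 / (p - 1)) + (- 2) = - e"
    using p3 by (simp add: e_def divide_simps)
  have k: "\<kappa> = (p - 1) powr (- 1 / (p - 1))" by (simp add: kappa_def)
  have sq: "(p - 1)^2 = (p - 1) powr 2" using pm by (simp add: powr_numeral)
  have "a = (p - 1) powr ((p - 2) / (p - 1)) * (p - 1) powr (- 1 / (p - 1)) / (p - 1) powr 2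
      * XX powr e * mu powr (- e)"
  proof -
    have me: "- (p + 1) / (p - 1) = - ((p + 1) / (p - 1))" by (rule minus_divide_left[symmetric])
    show ?thesis unfolding astar_def b_eq k sq e_def me by (simp add: field_simps)
  qed
  also have "(p - 1) powr ((p - 2) / (p - 1)) * (p - 1) powr (- 1 / (p - 1)) / (p - 1) powr 2
      = (p - 1) powr ((p - 2) / (p - 1) + (- 1 / (p - 1)) + (- 2))"
  proof -
    have "(p - 1) powr ((p - 2) / (p - 1) + (- 1 / (p - 1)) + (- 2))
       = (p - 1) powr ((p - 2) / (p - 1)) * (p - 1) powr (- 1 / (p - 1)) * (p - 1) powr (- 2)"
      by (simp only: powr_add)
    also have "(p - 1) powr (- 2) = 1 / (p - 1) powr 2" by (simp add: powr_minus divide_simps)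
    finally show ?thesis by simp
  qed
  also have "\<dots> = (p - 1) powr (- e)" unfolding ex ..
  finally have "a = (p - 1) powr (- e) * XX powr e * mu powr (- e)" .
  also have "\<dots> = (XX / ((p - 1) * mu)) powr e"
    using pm mu0 XX_pos by (simp add: powr_divide powr_mult powr_minus divide_simps)
  finally show ?thesis unfolding e_def .
qed

lemma a_pos: "a > 0" using a_formula XX_pos p3 mu0 by simp

lemma a_q1: "a powr (q - 1) = XX / ((p - 1) * mu)"
proof -
  have pm: "p - 1 > 0" "p + 1 > 0" using p3 by auto
  have "(p + 1) / (p - 1) * (q - 1) = 1"
    using p3 by (simp add: qexp_def divide_simps)
  thus ?thesis unfolding a_formula powr_powr using XX_pos mu0 pm by simp
qed

lemma key_const: "mu * a powr q * q * JJ = 4 * \<beta> * a"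
proof -
  have pm: "p - 1 > 0" "p + 1 > 0" using p3 by auto
  have aq: "a powr q = a * a powr (q - 1)" using a_pos powr_add[of a 1 "q - 1"] by simp
  have J: "JJ > 0" using JJ_ge by simp
  have "mu * a powr (q - 1) * q * JJ = (p + 1)^2 * q / (p * (p - 1))"
    unfolding a_q1 XX_def II_eq using mu0 pm J by (simp add: field_simps)
  also have "\<dots> = 4 * \<beta>" using p3 unfolding qexp_def betaexp_def
    by (simp add: divide_simps) (simp add: algebra_simps power2_eq_square)
  finally show ?thesis unfolding aq by (simp add: algebra_simps)
qed


lemma herm2: "herm 2 y = y^2 - 2" by (simp add: numeral_2_eq_2)

lemma Mh2_zero: "(LINT y|lborel. Mf y * herm 2 y * rho y) = 0"
proof -
  have q: "0 \<le> q" "q \<le> 2" using q_bounds by auto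
  define c where "c = mu * a powr q"
  have eq: "(\<lambda>y. Mf y * herm 2 y * rho y) = (\<lambda>y. (4 * \<beta> * a) * (rho y * y^2) + (- 4 * \<beta> * a) * rho y
     + (- \<beta> * a) * (rho y * y^4) + c * (y^2 * \<bar>y\<bar> powr q * rho y) + (- 2 * c) * (\<bar>y\<bar> powr q * rho y))"
    by (auto simp: Mf_def herm2 c_def algebra_simps power2_eq_square power4_eq_xxxx)
  have i0: "integrable lborel rho" by (rule int_rho)
  have i2: "integrable lborel (\<lambda>y. rho y * y^2)" by (rule int_rho_pow)
  have i4: "integrable lborel (\<lambda>y. rho y * y^4)" by (rule int_rho_pow)
  have j2: "integrable lborel (\<lambda>y. y^2 * \<bar>y\<bar> powr q * rho y)" using int_absq2[OF q] .
  have j0: "integrable lborel (\<lambda>y. \<bar>y\<bar> powr q * rho y)" using int_absq[OF q] .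
  have "(LINT y|lborel. Mf y * herm 2 y * rho y) = (4 * \<beta> * a) * 2 + (- 4 * \<beta> * a) * 1
     + (- \<beta> * a) * 12 + c * (2 * (q + 1) * JJ) + (- 2 * c) * JJ"
  proof -
    have ib: "(LINT y|lborel. y^2 * \<bar>y\<bar> powr q * rho y) = 2 * (q + 1) * JJ"
      unfolding JJ_def using q_bounds by (intro ibp_moment) auto
    show ?thesis unfolding eq using i0 i2 i4 j2 j0
      by (simp add: rho_int1 rho_int2 rho_int4 ib JJ_def[symmetric])
  qed
  also have "\<dots> = - 8 * \<beta> * a + 2 * (c * q * JJ)" by (simp add: algebra_simps)
  also have "c * q * JJ = 4 * \<beta> * a" using key_const by (simp add: c_def)
  finally show ?thesis by simp
qed

end

lemma herm_bd: "\<bar>herm m y\<bar> \<le> 2 * (1 + y^2)"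
proof -
  consider "m = 0" | "m = 1" | "m = 2" | k where "m = Suc (Suc (Suc k))"
    by (metis One_nat_def Suc_1 not0_implies_Suc)
  thus ?thesis
  proof cases
    case 1 thus ?thesis by simp
  next
    case 2 thus ?thesis using pow_le_poly[of 1 2 y] by simp
  next
    case 3 thus ?thesis by (simp add: numeral_2_eq_2 abs_le_iff)
  next
    case 4 thus ?thesis by simp
  qed
qed

lemma herm_meas: "herm m \<in> borel_measurable lborel"
proof -
  consider "m = 0" | "m = 1" | "m = 2" | k where "m = Suc (Suc (Suc k))"
    by (metis One_nat_def Suc_1 not0_implies_Suc)
  thus ?thesis
  proof cases
    case 1 thus ?thesis by (simp add: fun_eq_iff[symmetric] cong: measurable_cong)
  next
    case 2
    have "herm m = (\<lambda>y. y)" using 2 by auto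
    thus ?thesis by simp
  next
    case 3
    have "herm m = (\<lambda>y. y^2 - 2)" using 3 by (auto simp: numeral_2_eq_2)
    thus ?thesis by simp
  next
    case 4
    have "herm m = (\<lambda>y. 0)" using 4 by auto
    thus ?thesis by simp
  qed
qed

lemma kherm_meas: "kherm m \<in> borel_measurable lborel"
  unfolding kherm_def[abs_def] using herm_meas[of m] by measurable

lemma kherm_bd: "\<bar>kherm m y\<bar> \<le> (2 * \<bar>1 / (LINT z|lborel. (herm m z)^2 * rho z)\<bar>) * (1 + y^2)"
proof -
  define N where "N = (LINT z|lborel. (herm m z)^2 * rho z)"
  have "\<bar>kherm m y\<bar> = \<bar>1 / N\<bar> * \<bar>herm m y\<bar>" by (simp add: kherm_def N_def abs_divide)
  also have "\<dots> \<le> \<bar>1 / N\<bar> * (2 * (1 + y^2))" using herm_bd by (intro mult_left_mono) auto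
  finally show ?thesis by (simp add: N_def)
qed

lemma ev_nn: "0 \<le> y^2" "0 \<le> y^4" "0 \<le> y^6" for y :: real
  using zero_le_power2[of y] zero_le_power2[of "y^2"] zero_le_power2[of "y^3"]
  by (simp_all add: power_mult[symmetric])

lemma poly_a: "(1 + y^4) * (1 + y^2) \<le> 4 * (1 + y^6)" for y :: real
proof -
  have "(1 + y^4) * (1 + y^2) = 1 + y^2 + y^4 + y^6" by algebra
  thus ?thesis using poly6[of y] ev_nn[of y] by (smt (verit))
qed
lemma poly_b: "1 + y^2 \<le> 2 * (1 + y^4)" for y :: real
proof -
  have "y^2 \<le> 1 + y^4" using pow_le_poly[of 2 4 y] by simp
  thus ?thesis using ev_nn[of y] by (smt (verit))
qed
lemma poly_c: "y^2 * ((1 + y^2) * (1 + y^2)) \<le> 4 * (1 + y^6)" for y :: real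
proof -
  have "y^2 * ((1 + y^2) * (1 + y^2)) = y^2 + 2 * y^4 + y^6" by algebra
  thus ?thesis using poly6[of y] ev_nn[of y] by (smt (verit))
qed
lemma poly_d: "(1 + y^2) * (1 + y^2) \<le> 4 * (1 + y^6)" for y :: real
proof -
  have "(1 + y^2) * (1 + y^2) = 1 + 2 * y^2 + y^4" by algebra
  thus ?thesis using poly6[of y] ev_nn[of y] by (smt (verit))
qed


context LL begin

lemma tau_powr: "tau s = s powr (- (2 * \<beta> + 1))" if "s > 0"
proof -
  have e: "- (2 * \<beta> + 1) = - 2 * \<beta> - 1" by simp
  have "s powr (- 2 * \<beta> - 1) = s powr (- 2 * \<beta>) / s powr 1" by (rule powr_diff)
  thus ?thesis unfolding e using that by (simp add: tau_def sig_def)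
qed

lemma sig2_powr: "(sig s)^2 = s powr (- 4 * \<beta>)" if "s > 0"
  using that by (simp add: sig_def power2_eq_square powr_add[symmetric])

lemma sig2_le_tau: "(sig s)^2 \<le> tau s" if "s \<ge> 1"
  using that beta_bounds by (simp add: tau_powr sig2_powr, intro powr_mono) auto

lemma tau_pos: "tau s > 0" if "s > 0" using that sig_pos[OF that] by (simp add: tau_def)

definition "cM = 2 * \<beta> * a + \<beta> * a + mu * a powr q"

lemma Mf_bd: "\<bar>Mf y\<bar> \<le> cM * (1 + y^2)"
proof -
  have "\<bar>Mf y\<bar> \<le> 2 * \<beta> * a + \<beta> * a * y^2 + mu * a powr q * \<bar>y\<bar> powr q"
    unfolding Mf_def using a_nonneg beta_bounds mu0 by (simp add: abs_le_iff)
  also have "\<dots> \<le> 2 * \<beta> * a + \<beta> * a * y^2 + mu * a powr q * (1 + y^2)"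
    using absq_sq[of q y] q_bounds mu0 by (intro add_left_mono mult_left_mono) auto
  also have "\<dots> \<le> cM * (1 + y^2)"
    using a_nonneg beta_bounds mu0 ev_nn[of y] unfolding cM_def
    by (simp add: algebra_simps)
  finally show ?thesis .
qed

lemma cM_nonneg: "cM \<ge> 0" using a_nonneg beta_bounds mu0 by (simp add: cM_def)

lemma Mf_meas: "Mf \<in> borel_measurable lborel" unfolding Mf_def[abs_def] by measurable

lemma E_bound2: "\<exists>cE\<ge>0. \<forall>s\<ge>1. \<forall>y. \<bar>Ef y s\<bar> \<le> cE * (sig s)^2 * (1 + y^4)"
proof -
  obtain c1 c2 where c: "0 \<le> c1" "0 \<le> c2" "\<forall>s\<ge>1. \<forall>y.
   \<bar>Ef y s\<bar> \<le> (sig s)^2 * (c1 * (1 + y^2) + c2 * (y^4 + \<bar>y\<bar> powr q * y^2) / s)"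
    using E_bound by blast
  show ?thesis
  proof (intro exI conjI allI impI)
    show "0 \<le> 2 * c1 + 3 * c2" using c by simp
    fix s y :: real assume s: "1 \<le> s"
    have A: "c1 * (1 + y^2) \<le> c1 * (2 * (1 + y^4))" using poly_b[of y] c by (intro mult_left_mono) auto
    have B0: "y^4 + \<bar>y\<bar> powr q * y^2 \<le> 3 * (1 + y^4)"
    proof -
      have "\<bar>y\<bar> powr q * y^2 \<le> (1 + y^2) * y^2" using absq_sq[of q y] q_bounds by (intro mult_right_mono) auto
      also have "\<dots> = y^2 + y^4" by algebra
      finally show ?thesis using pow_le_poly[of 2 4 y] ev_nn[of y] by simp
    qed
    have B: "c2 * (y^4 + \<bar>y\<bar> powr q * y^2) / s \<le> c2 * (3 * (1 + y^4))"
    proof -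
      have "0 \<le> c2 * (y^4 + \<bar>y\<bar> powr q * y^2)" using c ev_nn[of y] by simp
      hence "c2 * (y^4 + \<bar>y\<bar> powr q * y^2) / s \<le> c2 * (y^4 + \<bar>y\<bar> powr q * y^2)"
        using s by (simp add: divide_le_eq mult_le_cancel_left1)
      also have "\<dots> \<le> c2 * (3 * (1 + y^4))" using B0 c by (intro mult_left_mono) auto
      finally show ?thesis .
    qed
    have "\<bar>Ef y s\<bar> \<le> (sig s)^2 * (c1 * (1 + y^2) + c2 * (y^4 + \<bar>y\<bar> powr q * y^2) / s)"
      using c(3) s by blast
    also have "\<dots> \<le> (sig s)^2 * (c1 * (2 * (1 + y^4)) + c2 * (3 * (1 + y^4)))"
      using A B by (intro mult_left_mono) auto
    also have "\<dots> = (2 * c1 + 3 * c2) * (sig s)^2 * (1 + y^4)" by (simp add: algebra_simps)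
    finally show "\<bar>Ef y s\<bar> \<le> (2 * c1 + 3 * c2) * (sig s)^2 * (1 + y^4)" .
  qed
qed

lemma Rform_meas: "(\<lambda>y. Rform y s) \<in> borel_measurable lborel"
  unfolding Rform_def D2_def D1_def Ds_def phi_def GG_def sig_def by measurable

lemma Rerr_meas: "(\<lambda>y. Rerr p mu y s) \<in> borel_measurable lborel" if "s > 0"
proof -
  have "(\<lambda>y. Rerr p mu y s) = (\<lambda>y. Rform y s)" using Rerr_eq[OF that] by auto
  thus ?thesis using Rform_meas by simp
qed

lemma Rerr_split: "Rerr p mu y s = tau s * Mf y + Ef y s" if "s > 0"
  using Rerr_eq[OF that] R_split[OF that] by simp

end

locale LL2 = LL +
  fixes chi0 :: "real \<Rightarrow> real" and K :: real
  assumes chi_cont: "continuous_on UNIV chi0"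
    and chi_01: "\<forall>x\<ge>0. 0 \<le> chi0 x \<and> chi0 x \<le> 1"
    and chi_1: "\<forall>x. 0 \<le> x \<and> x \<le> 1 \<longrightarrow> chi0 x = 1"
    and chi_2: "\<forall>x>2. chi0 x = 0"
    and K_ge: "K \<ge> 6"
begin

abbreviation "ch y s \<equiv> cutoff chi0 K p y s"

lemma Ks_pos: "K * s powr \<beta> > 0" if "s > 0" using K_ge that by simp

lemma ch_01: "0 \<le> ch y s \<and> ch y s \<le> 1" if "s > 0"
  unfolding cutoff_def using chi_01 Ks_pos[OF that] by simp

lemma ch_one: "ch y s = 1" if "s > 0" "\<bar>y\<bar> \<le> K * s powr \<beta>"
  unfolding cutoff_def using chi_1 Ks_pos[OF that(1)] that(2) by (simp add: divide_le_eq)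

lemma ch_zero: "ch y s = 0" if "s > 0" "\<bar>y\<bar> > 2 * K * s powr \<beta>"
  unfolding cutoff_def using chi_2 Ks_pos[OF that(1)] that(2) by (simp add: less_divide_eq mult.assoc)

lemma ch_meas: "(\<lambda>y. ch y s) \<in> borel_measurable lborel"
proof -
  have [measurable]: "chi0 \<in> borel_measurable borel" by (rule borel_measurable_continuous_onI[OF chi_cont])
  show ?thesis unfolding cutoff_def by measurable
qed

lemma one_minus_ch: "1 - ch y s \<le> y^2 / (K * s powr \<beta>)^2" if "s > 0"
proof (cases "\<bar>y\<bar> \<le> K * s powr \<beta>")
  case True thus ?thesis using ch_one[OF that True] by simp
next
  case False
  hence "(K * s powr \<beta>)^2 \<le> y^2" using Ks_pos[OF that]
    by (metis abs_le_square_iff abs_of_pos less_le_not_le nle_le)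
  moreover have "(K * s powr \<beta>)^2 > 0" by (rule zero_less_power[OF Ks_pos[OF that]])
  ultimately have "1 \<le> y^2 / (K * s powr \<beta>)^2" by (simp add: le_divide_eq)
  thus ?thesis using ch_01[OF that, of y] by linarith
qed

lemma R_bd: "\<exists>c\<ge>0. \<forall>s\<ge>1. \<forall>y. \<bar>Rerr p mu y s\<bar> \<le> c * tau s * (1 + y^4)"
proof -
  obtain cE where cE: "cE \<ge> 0" "\<forall>s\<ge>1. \<forall>y. \<bar>Ef y s\<bar> \<le> cE * (sig s)^2 * (1 + y^4)"
    using E_bound2 by blast
  show ?thesis
  proof (intro exI conjI allI impI)
    show "0 \<le> 2 * cM + cE" using cM_nonneg cE by simp
    fix s y :: real assume s: "1 \<le> s"
    have s0: "s > 0" using s by simp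
    have "\<bar>Rerr p mu y s\<bar> \<le> tau s * \<bar>Mf y\<bar> + \<bar>Ef y s\<bar>"
      unfolding Rerr_split[OF s0] using tau_pos[OF s0] abs_triangle_ineq[of "tau s * Mf y" "Ef y s"]
      by (simp add: abs_mult)
    also have "\<dots> \<le> tau s * (cM * (2 * (1 + y^4))) + cE * tau s * (1 + y^4)"
    proof (intro add_mono)
      show "tau s * \<bar>Mf y\<bar> \<le> tau s * (cM * (2 * (1 + y^4)))"
      proof -
        have "cM * (1 + y^2) \<le> cM * (2 * (1 + y^4))" using poly_b[of y] cM_nonneg by (intro mult_left_mono)
        hence "\<bar>Mf y\<bar> \<le> cM * (2 * (1 + y^4))" using Mf_bd[of y] by linarith
        thus ?thesis using tau_pos[OF s0] by (intro mult_left_mono) auto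
      qed
      have "cE * (sig s)^2 * (1 + y^4) \<le> cE * tau s * (1 + y^4)"
        using sig2_le_tau[OF s] cE ev_nn[of y] by (intro mult_right_mono mult_left_mono) auto
      thus "\<bar>Ef y s\<bar> \<le> cE * tau s * (1 + y^4)" using cE(2) s by (meson order_trans)
    qed
    also have "\<dots> = (2 * cM + cE) * tau s * (1 + y^4)" by (simp add: algebra_simps)
    finally show "\<bar>Rerr p mu y s\<bar> \<le> (2 * cM + cE) * tau s * (1 + y^4)" .
  qed
qed

definition "kc m = 2 * \<bar>1 / (LINT z|lborel. (herm m z)^2 * rho z)\<bar>"
lemma kc_nonneg: "kc m \<ge> 0" by (simp add: kc_def)
lemma k_bd: "\<bar>kherm m y\<bar> \<le> kc m * (1 + y^2)" using kherm_bd by (simp add: kc_def)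

lemma integral_abs_le:
  fixes g :: "real \<Rightarrow> real"
  assumes "g \<in> borel_measurable lborel" "\<And>y. \<bar>g y\<bar> \<le> c * UU y"
  shows "\<bar>LINT y|lborel. g y\<bar> \<le> c * (LINT y|lborel. UU y)"
proof -
  have ig: "integrable lborel g" using integrable_by_UU[OF assms] .
  have "\<bar>LINT y|lborel. g y\<bar> \<le> (LINT y|lborel. \<bar>g y\<bar>)"
    using integral_norm_bound[of lborel g] by simp
  also have "\<dots> \<le> (LINT y|lborel. c * UU y)"
    using ig int_UU assms(2) by (intro integral_mono) auto
  also have "\<dots> = c * (LINT y|lborel. UU y)" by simp
  finally show ?thesis .
qed

lemma rcoef_bd: "\<exists>C\<ge>0. \<forall>s\<ge>1. \<bar>rcoef chi0 K p s (\<lambda>y. Rerr p mu y s) m\<bar> \<le> C * tau s"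
proof -
  obtain c where c: "c \<ge> 0" "\<forall>s\<ge>1. \<forall>y. \<bar>Rerr p mu y s\<bar> \<le> c * tau s * (1 + y^4)"
    using R_bd by blast
  define IU where "IU = (LINT y|lborel. UU y)"
  have IU: "IU \<ge> 0" unfolding IU_def using UU_nonneg by simp
  show ?thesis
  proof (intro exI conjI allI impI)
    show "0 \<le> 4 * c * kc m * IU" using c kc_nonneg IU by simp
    fix s :: real assume s: "1 \<le> s"
    have s0: "s > 0" using s by simp
    have "\<bar>rcoef chi0 K p s (\<lambda>y. Rerr p mu y s) m\<bar> \<le> (4 * c * kc m * tau s) * IU"
      unfolding rcoef_def rpart_b_def IU_def
    proof (rule integral_abs_le)
      show "(\<lambda>y. ch y s * Rerr p mu y s * kherm m y * rho y) \<in> borel_measurable lborel"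
        using ch_meas Rerr_meas[OF s0] kherm_meas meas_rho by measurable
      fix y :: real
      have "\<bar>ch y s * Rerr p mu y s * kherm m y * rho y\<bar> = ch y s * \<bar>Rerr p mu y s\<bar> * \<bar>kherm m y\<bar> * rho y"
        using ch_01[OF s0, of y] rho_pos[of y] by (simp add: abs_mult)
      also have "\<dots> \<le> 1 * (c * tau s * (1 + y^4)) * (kc m * (1 + y^2)) * rho y"
        using ch_01[OF s0, of y] rho_pos[of y] c s k_bd[of m y] tau_pos[OF s0] kc_nonneg[of m] ev_nn[of y]
        by (intro mult_mono mult_right_mono) auto
      also have "\<dots> = (c * kc m * tau s) * ((1 + y^4) * (1 + y^2)) * rho y" by (simp add: algebra_simps)
      also have "\<dots> \<le> (c * kc m * tau s) * (4 * (1 + y^6)) * rho y"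
        using poly_a[of y] c kc_nonneg[of m] tau_pos[OF s0] rho_pos[of y]
        by (intro mult_right_mono mult_left_mono) auto
      also have "\<dots> = (4 * c * kc m * tau s) * UU y" by (simp add: UU_def algebra_simps)
      finally show "\<bar>ch y s * Rerr p mu y s * kherm m y * rho y\<bar> \<le> (4 * c * kc m * tau s) * UU y" .
    qed
    thus "\<bar>rcoef chi0 K p s (\<lambda>y. Rerr p mu y s) m\<bar> \<le> 4 * c * kc m * IU * tau s" by (simp add: algebra_simps)
  qed
qed


lemma Ef_meas: "(\<lambda>y. Ef y s) \<in> borel_measurable lborel" if "s > 0"
proof -
  have "(\<lambda>y. Ef y s) = (\<lambda>y. Rform y s - tau s * Mf y)" using R_split[OF that] by (auto simp: algebra_simps)
  thus ?thesis using Rform_meas[of s] Mf_meas by simp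
qed

lemma tau_K: "tau s / (K * s powr \<beta>)^2 \<le> (sig s)^2" if "s \<ge> 1"
proof -
  have s0: "s > 0" using that by simp
  have e: "(K * s powr \<beta>)^2 = K^2 * s powr (2 * \<beta>)"
    using s0 by (simp add: power_mult_distrib powr_add[symmetric] power2_eq_square)
  have e2: "sig s * s powr (2 * \<beta>) = 1" using s0 by (simp add: sig_def powr_add[symmetric])
  have "tau s / (K * s powr \<beta>)^2 = (sig s)^2 / (s * K^2)"
    unfolding e tau_def using s0 K_ge e2 by (simp add: field_simps power2_eq_square)
  also have "\<dots> \<le> (sig s)^2 / 1"
  proof (rule divide_left_mono)
    have "1 \<le> K^2" using K_ge by (simp add: one_le_power)
    thus "1 \<le> s * K^2" using that by (metis mult_mono mult_1_right order.trans zero_le_one)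
    thus "0 < s * K^2 * 1" by simp
  qed simp
  also have "\<dots> = (sig s)^2" by simp
  finally show ?thesis .
qed

lemma r2_bd: "\<exists>C\<ge>0. \<forall>s\<ge>1. \<bar>rcoef chi0 K p s (\<lambda>y. Rerr p mu y s) 2\<bar> \<le> C * (sig s)^2"
proof -
  obtain cE where cE: "cE \<ge> 0" "\<forall>s\<ge>1. \<forall>y. \<bar>Ef y s\<bar> \<le> cE * (sig s)^2 * (1 + y^4)"
    using E_bound2 by blast
  define IU where "IU = (LINT y|lborel. UU y)"
  have IU: "IU \<ge> 0" unfolding IU_def using UU_nonneg by simp
  define k where "k = kc 2"
  have k: "k \<ge> 0" "\<And>y. \<bar>kherm 2 y\<bar> \<le> k * (1 + y^2)" using kc_nonneg k_bd by (auto simp: k_def)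
  show ?thesis
  proof (intro exI conjI allI impI)
    show "0 \<le> 4 * k * IU * (cM + cE)" using k IU cM_nonneg cE by simp
    fix s :: real assume s: "1 \<le> s"
    have s0: "s > 0" using s by simp
    have ch: "0 \<le> ch y s" "ch y s \<le> 1" for y using ch_01[OF s0, of y] by auto
    note ms = ch_meas[of s] Ef_meas[OF s0] Mf_meas kherm_meas[of 2] meas_rho
    have Mb: "\<bar>Mf y * kherm 2 y * rho y\<bar> \<le> (4 * cM * k) * UU y" for y
    proof -
      have "\<bar>Mf y * kherm 2 y * rho y\<bar> = \<bar>Mf y\<bar> * \<bar>kherm 2 y\<bar> * rho y" using rho_pos[of y] by (simp add: abs_mult)
      also have "\<dots> \<le> (cM * (1 + y^2)) * (k * (1 + y^2)) * rho y"
        using Mf_bd[of y] k rho_pos[of y] cM_nonneg ev_nn[of y] by (intro mult_mono mult_right_mono) auto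
      also have "\<dots> = (cM * k) * ((1 + y^2) * (1 + y^2)) * rho y" by (simp add: algebra_simps)
      also have "\<dots> \<le> (cM * k) * (4 * (1 + y^6)) * rho y"
        using poly_d[of y] cM_nonneg k rho_pos[of y] by (intro mult_right_mono mult_left_mono) auto
      finally show ?thesis by (simp add: UU_def algebra_simps)
    qed
    have iM: "integrable lborel (\<lambda>y. Mf y * kherm 2 y * rho y)" by (rule integrable_by_UU[OF _ Mb]) (use ms in measurable)
    have iGM: "integrable lborel (\<lambda>y. ch y s * Mf y * kherm 2 y * rho y)"
    proof (rule integrable_by_UU[where c="4 * cM * k"])
      show "(\<lambda>y. ch y s * Mf y * kherm 2 y * rho y) \<in> borel_measurable lborel" using ms by measurable
      fix y
      have "\<bar>ch y s * Mf y * kherm 2 y * rho y\<bar> = ch y s * \<bar>Mf y * kherm 2 y * rho y\<bar>" using ch by (simp add: abs_mult)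
      also have "\<dots> \<le> 1 * \<bar>Mf y * kherm 2 y * rho y\<bar>" using ch by (intro mult_right_mono) auto
      finally show "\<bar>ch y s * Mf y * kherm 2 y * rho y\<bar> \<le> 4 * cM * k * UU y" using Mb[of y] by simp
    qed
    have tM: "\<bar>(1 - ch y s) * Mf y * kherm 2 y * rho y\<bar> \<le> (4 * cM * k / (K * s powr \<beta>)^2) * UU y" for y
    proof -
      have D: "(K * s powr \<beta>)^2 > 0" by (rule zero_less_power[OF Ks_pos[OF s0]])
      have "\<bar>(1 - ch y s) * Mf y * kherm 2 y * rho y\<bar> = (1 - ch y s) * (\<bar>Mf y\<bar> * \<bar>kherm 2 y\<bar> * rho y)"
        using ch[of y] rho_pos[of y] by (simp add: abs_mult)
      also have "\<dots> \<le> (y^2 / (K * s powr \<beta>)^2) * ((cM * (1 + y^2)) * (k * (1 + y^2)) * rho y)"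
        using one_minus_ch[OF s0, of y] ch[of y] Mf_bd[of y] k rho_pos[of y] cM_nonneg ev_nn[of y] D
        by (intro mult_mono mult_right_mono) auto
      also have "\<dots> = (cM * k / (K * s powr \<beta>)^2) * (y^2 * ((1 + y^2) * (1 + y^2))) * rho y"
        by (simp add: divide_inverse algebra_simps)
      also have "\<dots> \<le> (cM * k / (K * s powr \<beta>)^2) * (4 * (1 + y^6)) * rho y"
        using poly_c[of y] cM_nonneg k rho_pos[of y] D by (intro mult_right_mono mult_left_mono) auto
      finally show ?thesis by (simp add: UU_def divide_inverse algebra_simps)
    qed
    have iTM: "integrable lborel (\<lambda>y. (1 - ch y s) * Mf y * kherm 2 y * rho y)"
      by (rule integrable_by_UU[OF _ tM]) (use ms in measurable)
    have Eb: "\<bar>ch y s * Ef y s * kherm 2 y * rho y\<bar> \<le> (4 * cE * k * (sig s)^2) * UU y" for y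
    proof -
      have "\<bar>ch y s * Ef y s * kherm 2 y * rho y\<bar> = ch y s * (\<bar>Ef y s\<bar> * \<bar>kherm 2 y\<bar> * rho y)"
        using ch[of y] rho_pos[of y] by (simp add: abs_mult)
      also have "\<dots> \<le> 1 * ((cE * (sig s)^2 * (1 + y^4)) * (k * (1 + y^2)) * rho y)"
        using ch[of y] cE s k rho_pos[of y] ev_nn[of y] by (intro mult_mono mult_right_mono) auto
      also have "\<dots> = (cE * k * (sig s)^2) * ((1 + y^4) * (1 + y^2)) * rho y" by (simp add: algebra_simps)
      also have "\<dots> \<le> (cE * k * (sig s)^2) * (4 * (1 + y^6)) * rho y"
        using poly_a[of y] cE k rho_pos[of y] by (intro mult_right_mono mult_left_mono) auto
      finally show ?thesis by (simp add: UU_def algebra_simps)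
    qed
    have iGE: "integrable lborel (\<lambda>y. ch y s * Ef y s * kherm 2 y * rho y)"
      by (rule integrable_by_UU[OF _ Eb]) (use ms in measurable)
    have split: "(\<lambda>y. rpart_b chi0 K p s (\<lambda>y. Rerr p mu y s) y * kherm 2 y * rho y)
       = (\<lambda>y. tau s * (ch y s * Mf y * kherm 2 y * rho y) + ch y s * Ef y s * kherm 2 y * rho y)"
      by (auto simp: rpart_b_def Rerr_split[OF s0] algebra_simps)
    have split2: "(\<lambda>y. ch y s * Mf y * kherm 2 y * rho y)
       = (\<lambda>y. Mf y * kherm 2 y * rho y - (1 - ch y s) * Mf y * kherm 2 y * rho y)"
      by (auto simp: algebra_simps)
    have h0: "(LINT y|lborel. Mf y * kherm 2 y * rho y) = 0"
    proof -
      have "(\<lambda>y. Mf y * kherm 2 y * rho y) = (\<lambda>y. (Mf y * herm 2 y * rho y) / (LINT z|lborel. (herm 2 z)^2 * rho z))"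
        by (auto simp: kherm_def)
      thus ?thesis using Mh2_zero by simp
    qed
    define A where "A = (LINT y|lborel. (1 - ch y s) * Mf y * kherm 2 y * rho y)"
    define B where "B = (LINT y|lborel. ch y s * Ef y s * kherm 2 y * rho y)"
    have req: "rcoef chi0 K p s (\<lambda>y. Rerr p mu y s) 2 = tau s * (- A) + B"
    proof -
      have "rcoef chi0 K p s (\<lambda>y. Rerr p mu y s) 2 = tau s * (LINT y|lborel. ch y s * Mf y * kherm 2 y * rho y)
         + (LINT y|lborel. ch y s * Ef y s * kherm 2 y * rho y)"
        unfolding rcoef_def split using iGM iGE by simp
      moreover have "(LINT y|lborel. ch y s * Mf y * kherm 2 y * rho y) = 0 - (LINT y|lborel. (1 - ch y s) * Mf y * kherm 2 y * rho y)"
        unfolding split2 h0[symmetric] using iM iTM by (rule Bochner_Integration.integral_diff)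
      ultimately show ?thesis unfolding A_def B_def by simp
    qed
    have "\<bar>rcoef chi0 K p s (\<lambda>y. Rerr p mu y s) 2\<bar> \<le> \<bar>tau s * (- A)\<bar> + \<bar>B\<bar>"
      unfolding req by (rule abs_triangle_ineq)
    also have "\<bar>tau s * (- A)\<bar> = tau s * \<bar>A\<bar>" using tau_pos[OF s0] by (simp add: abs_mult)
    also have "tau s * \<bar>A\<bar> + \<bar>B\<bar> \<le> tau s * ((4 * cM * k / (K * s powr \<beta>)^2) * IU) + (4 * cE * k * (sig s)^2) * IU"
    proof (rule add_mono)
      have "\<bar>A\<bar> \<le> (4 * cM * k / (K * s powr \<beta>)^2) * IU"
        unfolding A_def IU_def by (rule integral_abs_le[OF borel_measurable_integrable[OF iTM] tM])
      thus "tau s * \<bar>A\<bar> \<le> tau s * ((4 * cM * k / (K * s powr \<beta>)^2) * IU)"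
        using tau_pos[OF s0] by (intro mult_left_mono) auto
      show "\<bar>B\<bar> \<le> (4 * cE * k * (sig s)^2) * IU"
        unfolding B_def IU_def by (rule integral_abs_le[OF borel_measurable_integrable[OF iGE] Eb])
    qed
    also have "\<dots> = (4 * cM * k * IU) * (tau s / (K * s powr \<beta>)^2) + (4 * cE * k * IU) * (sig s)^2"
      by (simp add: algebra_simps)
    also have "\<dots> \<le> (4 * cM * k * IU) * (sig s)^2 + (4 * cE * k * IU) * (sig s)^2"
      using tau_K[OF s] cM_nonneg k IU cE by (intro add_mono mult_left_mono) auto
    also have "\<dots> = 4 * k * IU * (cM + cE) * (sig s)^2" by (simp add: algebra_simps)
    finally show "\<bar>rcoef chi0 K p s (\<lambda>y. Rerr p mu y s) 2\<bar> \<le> 4 * k * IU * (cM + cE) * (sig s)^2" .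
  qed
qed

end

context LL2 begin

lemma spow_le: "s powr (- x) \<le> s powr (- g)" if "s \<ge> 1" "g \<le> x" for s x g :: real
  using that by (intro powr_mono) auto

lemma sig2_s: "(sig s)^2 / s = s powr (- 4 * \<beta> - 1)" if "s > 0"
  using that by (simp add: sig2_powr powr_diff)

lemma sig2_sb: "(sig s)^2 / s * s powr \<beta> = s powr (- 3 * \<beta> - 1)" if "s > 0"
proof -
  have "(sig s)^2 / s * s powr \<beta> = s powr (- 4 * \<beta> - 1 + \<beta>)" unfolding sig2_s[OF that] by (rule powr_add[symmetric])
  also have "- 4 * \<beta> - 1 + \<beta> = - 3 * \<beta> - 1" by simp
  finally show ?thesis .
qed

lemma rminus_bd:
  assumes gam: "3 * \<beta> < gam" "gam < min (5 * \<beta> - 1) (2 * \<beta> + 1)"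
  shows "\<exists>Cm\<ge>0. \<forall>s\<ge>1. \<forall>y. \<bar>rpart_minus chi0 K p s (\<lambda>y. Rerr p mu y s) y\<bar> \<le> Cm * s powr (- gam) * (1 + \<bar>y\<bar>^3)"
proof -
  obtain c1 c2 where c: "0 \<le> c1" "0 \<le> c2" "\<forall>s\<ge>1. \<forall>y.
   \<bar>Ef y s\<bar> \<le> (sig s)^2 * (c1 * (1 + y^2) + c2 * (y^4 + \<bar>y\<bar> powr q * y^2) / s)"
    using E_bound by blast
  obtain C0 where C0: "C0 \<ge> 0" "\<forall>s\<ge>1. \<bar>rcoef chi0 K p s (\<lambda>y. Rerr p mu y s) 0\<bar> \<le> C0 * tau s"
    using rcoef_bd by blast
  obtain C1 where C1: "C1 \<ge> 0" "\<forall>s\<ge>1. \<bar>rcoef chi0 K p s (\<lambda>y. Rerr p mu y s) 1\<bar> \<le> C1 * tau s"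
    using rcoef_bd by blast
  obtain C2 where C2: "C2 \<ge> 0" "\<forall>s\<ge>1. \<bar>rcoef chi0 K p s (\<lambda>y. Rerr p mu y s) 2\<bar> \<le> C2 * (sig s)^2"
    using r2_bd by blast
  have g1: "gam \<le> 2 * \<beta> + 1" "gam \<le> 4 * \<beta>" "gam \<le> 4 * \<beta> + 1" "gam \<le> 3 * \<beta> + 1"
    using gam beta_bounds by auto
  define D where "D = 2 * cM + 2 * c1 + c2 + 4 * K * c2"
  have D: "D \<ge> 0" unfolding D_def using cM_nonneg c K_ge by simp
  show ?thesis
  proof (intro exI conjI allI impI)
    show "0 \<le> D + 4 * (C0 + C1 + C2)" using D C0 C1 C2 by simp
    fix s y :: real assume s: "1 \<le> s"
    have s0: "s > 0" using s by simp
    have tg: "tau s \<le> s powr (- gam)" unfolding tau_powr[OF s0] using s g1 by (intro powr_mono) auto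
    have sg: "(sig s)^2 \<le> s powr (- gam)" unfolding sig2_powr[OF s0] using s g1 by (intro powr_mono) auto
    have sg1: "(sig s)^2 / s \<le> s powr (- gam)" unfolding sig2_s[OF s0] using s g1 by (intro powr_mono) auto
    have sg2: "(sig s)^2 / s * s powr \<beta> \<le> s powr (- gam)" unfolding sig2_sb[OF s0] using s g1 by (intro powr_mono) auto
    have Y: "0 \<le> \<bar>y\<bar>^3" by simp
    have y2: "1 + y^2 \<le> 2 * (1 + \<bar>y\<bar>^3)"
    proof -
      have "y^2 \<le> 1 + \<bar>y\<bar>^3" using pow_le_poly[of 2 3 y] by simp
      thus ?thesis using Y by (smt (verit))
    qed
    have chR: "\<bar>ch y s * Rerr p mu y s\<bar> \<le> D * s powr (- gam) * (1 + \<bar>y\<bar>^3)"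
    proof (cases "\<bar>y\<bar> \<le> 2 * K * s powr \<beta>")
      case False
      hence "ch y s = 0" using ch_zero[OF s0] by simp
      thus ?thesis using D by simp
    next
      case True
      define L where "L = 2 * K * s powr \<beta>"
      have L: "\<bar>y\<bar> \<le> L" "L \<ge> 0" using True Ks_pos[OF s0] by (auto simp: L_def)
      have y4: "y^4 \<le> L * \<bar>y\<bar>^3"
      proof -
        have "y^4 = \<bar>y\<bar> * \<bar>y\<bar>^3" by (simp add: power_even_abs_numeral flip: power_Suc)
        also have "\<dots> \<le> L * \<bar>y\<bar>^3" using L Y by (intro mult_right_mono) auto
        finally show ?thesis .
      qed
      have yq: "y^4 + \<bar>y\<bar> powr q * y^2 \<le> (1 + 2 * L) * (1 + \<bar>y\<bar>^3)"
      proof -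
        have "\<bar>y\<bar> powr q * y^2 \<le> (1 + y^2) * y^2" using absq_sq[of q y] q_bounds by (intro mult_right_mono) auto
        also have "\<dots> = y^2 + y^4" by algebra
        finally have "\<bar>y\<bar> powr q * y^2 \<le> y^2 + y^4" .
        moreover have "y^2 \<le> 1 + \<bar>y\<bar>^3" using pow_le_poly[of 2 3 y] by simp
        moreover have "(1 + 2 * L) * (1 + \<bar>y\<bar>^3) = 1 + \<bar>y\<bar>^3 + 2 * (L * \<bar>y\<bar>^3) + 2 * L" by (simp add: algebra_simps)
        ultimately show ?thesis using y4 L by linarith
      qed
      have "\<bar>Rerr p mu y s\<bar> \<le> tau s * \<bar>Mf y\<bar> + \<bar>Ef y s\<bar>"
        unfolding Rerr_split[OF s0] using tau_pos[OF s0] abs_triangle_ineq[of "tau s * Mf y" "Ef y s"]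
        by (simp add: abs_mult)
      also have "\<dots> \<le> tau s * (cM * (2 * (1 + \<bar>y\<bar>^3)))
           + (sig s)^2 * (c1 * (2 * (1 + \<bar>y\<bar>^3)) + c2 * ((1 + 2 * L) * (1 + \<bar>y\<bar>^3)) / s)"
      proof (rule add_mono)
        have "\<bar>Mf y\<bar> \<le> cM * (2 * (1 + \<bar>y\<bar>^3))" using Mf_bd[of y] y2 cM_nonneg
          by (meson mult_left_mono order_trans)
        thus "tau s * \<bar>Mf y\<bar> \<le> tau s * (cM * (2 * (1 + \<bar>y\<bar>^3)))" using tau_pos[OF s0] by (intro mult_left_mono) auto
        have "c1 * (1 + y^2) + c2 * (y^4 + \<bar>y\<bar> powr q * y^2) / s \<le> c1 * (2 * (1 + \<bar>y\<bar>^3)) + c2 * ((1 + 2 * L) * (1 + \<bar>y\<bar>^3)) / s"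
          using c y2 yq s0 by (intro add_mono divide_right_mono mult_left_mono) auto
        hence "(sig s)^2 * (c1 * (1 + y^2) + c2 * (y^4 + \<bar>y\<bar> powr q * y^2) / s) \<le> (sig s)^2 * (c1 * (2 * (1 + \<bar>y\<bar>^3)) + c2 * ((1 + 2 * L) * (1 + \<bar>y\<bar>^3)) / s)"
          by (intro mult_left_mono) auto
        thus "\<bar>Ef y s\<bar> \<le> (sig s)^2 * (c1 * (2 * (1 + \<bar>y\<bar>^3)) + c2 * ((1 + 2 * L) * (1 + \<bar>y\<bar>^3)) / s)"
          using c(3) s by (meson order_trans)
      qed
      also have "\<dots> = (2 * cM * tau s + 2 * c1 * (sig s)^2 + c2 * ((sig s)^2 / s) + 4 * K * c2 * ((sig s)^2 / s * s powr \<beta>)) * (1 + \<bar>y\<bar>^3)"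
        unfolding L_def using s0 by (simp add: field_simps)
      also have "\<dots> \<le> (2 * cM * s powr (- gam) + 2 * c1 * s powr (- gam) + c2 * s powr (- gam) + 4 * K * c2 * s powr (- gam)) * (1 + \<bar>y\<bar>^3)"
        using tg sg sg1 sg2 cM_nonneg c K_ge Y
        by (intro mult_right_mono add_mono mult_left_mono) auto
      also have "\<dots> = D * s powr (- gam) * (1 + \<bar>y\<bar>^3)" by (simp add: D_def algebra_simps)
      finally have "\<bar>Rerr p mu y s\<bar> \<le> D * s powr (- gam) * (1 + \<bar>y\<bar>^3)" .
      moreover have "\<bar>ch y s * Rerr p mu y s\<bar> \<le> \<bar>Rerr p mu y s\<bar>"
        using ch_01[OF s0, of y] by (simp add: abs_mult mult_left_le_one_le)
      ultimately show ?thesis by linarith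
    qed
    have hb: "\<bar>herm m y\<bar> \<le> 4 * (1 + \<bar>y\<bar>^3)" for m using herm_bd[of m y] y2 by (smt (verit))
    have r0: "\<bar>rcoef chi0 K p s (\<lambda>y. Rerr p mu y s) 0 * herm 0 y\<bar> \<le> C0 * s powr (- gam) * (4 * (1 + \<bar>y\<bar>^3))"
      unfolding abs_mult using C0 s tg hb[of 0] by (intro mult_mono) (auto intro: order_trans mult_left_mono)
    have r1: "\<bar>rcoef chi0 K p s (\<lambda>y. Rerr p mu y s) 1 * herm 1 y\<bar> \<le> C1 * s powr (- gam) * (4 * (1 + \<bar>y\<bar>^3))"
      unfolding abs_mult using C1 s tg hb[of 1] by (intro mult_mono) (auto intro: order_trans mult_left_mono)
    have r2: "\<bar>rcoef chi0 K p s (\<lambda>y. Rerr p mu y s) 2 * herm 2 y\<bar> \<le> C2 * s powr (- gam) * (4 * (1 + \<bar>y\<bar>^3))"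
      unfolding abs_mult using C2 s sg hb[of 2] by (intro mult_mono) (auto intro: order_trans mult_left_mono)
    have sum3: "(\<Sum>m\<le>2. f m) = f 0 + f 1 + f 2" for f :: "nat \<Rightarrow> real"
      by (simp add: numeral_2_eq_2)
    have "\<bar>rpart_minus chi0 K p s (\<lambda>y. Rerr p mu y s) y\<bar> \<le> \<bar>ch y s * Rerr p mu y s\<bar>
        + \<bar>rcoef chi0 K p s (\<lambda>y. Rerr p mu y s) 0 * herm 0 y\<bar> + \<bar>rcoef chi0 K p s (\<lambda>y. Rerr p mu y s) 1 * herm 1 y\<bar>
        + \<bar>rcoef chi0 K p s (\<lambda>y. Rerr p mu y s) 2 * herm 2 y\<bar>"
      unfolding rpart_minus_def rpart_b_def sum3 by linarith
    also have "\<dots> \<le> (D + 4 * (C0 + C1 + C2)) * s powr (- gam) * (1 + \<bar>y\<bar>^3)"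
      using chR r0 r1 r2 by (simp add: algebra_simps)
    finally show "\<bar>rpart_minus chi0 K p s (\<lambda>y. Rerr p mu y s) y\<bar> \<le> (D + 4 * (C0 + C1 + C2)) * s powr (- gam) * (1 + \<bar>y\<bar>^3)" .
  qed
qed

end

context LL2 begin

lemma main:
  assumes gam: "3 * \<beta> < gam" "gam < min (5 * \<beta> - 1) (2 * \<beta> + 1)"
  shows "\<exists>s11 C. C \<ge> 1 \<and> (\<forall>s\<ge>s11.
           (\<lambda>y. Rerr p mu y s) \<in> vartheta chi0 K p gam C s \<and>
           \<bar>rcoef chi0 K p s (\<lambda>y. Rerr p mu y s) 2\<bar> \<le> C / s powr (4 * \<beta>) \<and>
           Linf_le (\<lambda>y. Vpot p mu y s) C \<and>
           (\<forall>y. \<bar>Vpot p mu y s\<bar> \<le> C * (1 + y^2) / s powr (2 * \<beta>)))"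
proof -
  obtain CR where CR: "CR \<ge> 0" "\<forall>s\<ge>1. \<forall>y. \<bar>Rform y s\<bar> \<le> CR / s" using R_global by blast
  obtain Cm where Cm: "Cm \<ge> 0" "\<forall>s\<ge>1. \<forall>y. \<bar>rpart_minus chi0 K p s (\<lambda>y. Rerr p mu y s) y\<bar> \<le> Cm * s powr (- gam) * (1 + \<bar>y\<bar>^3)"
    using rminus_bd[OF gam] by blast
  obtain C0 where C0: "C0 \<ge> 0" "\<forall>s\<ge>1. \<bar>rcoef chi0 K p s (\<lambda>y. Rerr p mu y s) 0\<bar> \<le> C0 * tau s"
    using rcoef_bd by blast
  obtain C1 where C1: "C1 \<ge> 0" "\<forall>s\<ge>1. \<bar>rcoef chi0 K p s (\<lambda>y. Rerr p mu y s) 1\<bar> \<le> C1 * tau s"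
    using rcoef_bd by blast
  obtain C2 where C2: "C2 \<ge> 0" "\<forall>s\<ge>1. \<bar>rcoef chi0 K p s (\<lambda>y. Rerr p mu y s) 2\<bar> \<le> C2 * (sig s)^2"
    using r2_bd by blast
  obtain CV where CV: "CV \<ge> 0" "\<forall>s\<ge>1. \<forall>y. \<bar>Vpot p mu y s\<bar> \<le> CV \<and> \<bar>Vpot p mu y s\<bar> \<le> CV * (1 + y^2) / s powr (2 * \<beta>)"
    using V_bounds by blast
  define C where "C = 1 + CR + Cm + C0 + C1 + C2 + C2^2 + CV"
  have Cge: "C \<ge> 1" "CR \<le> C" "Cm \<le> C" "C0 \<le> C" "C1 \<le> C" "C2 \<le> C" "C2^2 \<le> C" "CV \<le> C"
    unfolding C_def using CR Cm C0 C1 C2 CV by (auto simp: zero_le_power2)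
  have CC: "C \<le> C^2" using Cge(1) by (simp add: power2_eq_square)
  have sC: "C2 \<le> sqrt C" using Cge(7) C2 by (metis real_le_rsqrt)
  show ?thesis
  proof (intro exI conjI allI impI)
    show "1 \<le> C" by (rule Cge(1))
    fix s :: real assume s: "1 \<le> s"
    have s0: "s > 0" using s by simp
    have Rb: "\<bar>Rerr p mu y s\<bar> \<le> C * s powr (- 1)" for y
    proof -
      have "\<bar>Rerr p mu y s\<bar> \<le> CR / s" using CR(2) s Rerr_eq[OF s0] by auto
      also have "\<dots> = CR * s powr (- 1)" using s0 by (simp add: powr_minus divide_simps)
      also have "\<dots> \<le> C * s powr (- 1)" using Cge by (intro mult_right_mono) auto
      finally show ?thesis .
    qed
    have r2b: "\<bar>rcoef chi0 K p s (\<lambda>y. Rerr p mu y s) 2\<bar> \<le> C2 * s powr (- 4 * \<beta>)"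
    proof -
      have "\<bar>rcoef chi0 K p s (\<lambda>y. Rerr p mu y s) 2\<bar> \<le> C2 * (sig s)^2" using C2(2) s by blast
      thus ?thesis unfolding sig2_powr[OF s0] .
    qed
    show "(\<lambda>y. Rerr p mu y s) \<in> vartheta chi0 K p gam C s"
      unfolding vartheta_def mem_Collect_eq
    proof (intro conjI)
      show "Linf (\<lambda>y. Rerr p mu y s)"
        unfolding Linf_def
      proof (intro conjI exI)
        show "(\<lambda>y. Rerr p mu y s) \<in> borel_measurable lborel" by (rule Rerr_meas[OF s0])
        show "AE y in lborel. \<bar>Rerr p mu y s\<bar> \<le> C * s powr (- 1)" using Rb by auto
      qed
      show "Linf_le (rpart_e chi0 K p s (\<lambda>y. Rerr p mu y s)) (C^2 * s powr (- (gam - 3 * \<beta>)))"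
        unfolding Linf_le_def
      proof (intro AE_I2)
        fix y :: real
        have "\<bar>rpart_e chi0 K p s (\<lambda>y. Rerr p mu y s) y\<bar> = \<bar>1 - ch y s\<bar> * \<bar>Rerr p mu y s\<bar>"
          by (simp add: rpart_e_def abs_mult)
        also have "\<dots> \<le> 1 * \<bar>Rerr p mu y s\<bar>" using ch_01[OF s0, of y] by (intro mult_right_mono) auto
        also have "\<dots> \<le> C * s powr (- 1)" using Rb by simp
        also have "\<dots> \<le> C^2 * s powr (- (gam - 3 * \<beta>))"
          using CC Cge s gam beta_bounds by (intro mult_mono powr_mono) auto
        finally show "\<bar>rpart_e chi0 K p s (\<lambda>y. Rerr p mu y s) y\<bar> \<le> C^2 * s powr (- (gam - 3 * \<beta>))" .
      qed
      show "Linf_le (\<lambda>y. rpart_minus chi0 K p s (\<lambda>y. Rerr p mu y s) y / (1 + \<bar>y\<bar>^3)) (C * s powr (- gam))"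
        unfolding Linf_le_def
      proof (intro AE_I2)
        fix y :: real
        have pos: "1 + \<bar>y\<bar>^3 > 0" by (smt (verit) zero_le_power abs_ge_zero)
        have "\<bar>rpart_minus chi0 K p s (\<lambda>y. Rerr p mu y s) y\<bar> \<le> Cm * s powr (- gam) * (1 + \<bar>y\<bar>^3)"
          using Cm(2) s by blast
        also have "\<dots> \<le> C * s powr (- gam) * (1 + \<bar>y\<bar>^3)" using Cge pos by (intro mult_right_mono) auto
        finally show "\<bar>rpart_minus chi0 K p s (\<lambda>y. Rerr p mu y s) y / (1 + \<bar>y\<bar>^3)\<bar> \<le> C * s powr (- gam)"
          using pos by (simp add: abs_divide divide_le_eq)
      qed
      show "\<bar>rcoef chi0 K p s (\<lambda>y. Rerr p mu y s) 0\<bar> \<le> C * s powr (- (2 * \<beta> + 1))"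
        using C0(2) s Cge tau_powr[OF s0] by (metis mult_right_mono order_trans powr_ge_zero)
      show "\<bar>rcoef chi0 K p s (\<lambda>y. Rerr p mu y s) 1\<bar> \<le> C * s powr (- (2 * \<beta> + 1))"
        using C1(2) s Cge tau_powr[OF s0] by (metis mult_right_mono order_trans powr_ge_zero)
      have "C2 * s powr (- 4 * \<beta>) \<le> sqrt C * s powr (- (4 * \<beta> - 1))"
        using sC s Cge by (intro mult_mono powr_mono) auto
      thus "\<bar>rcoef chi0 K p s (\<lambda>y. Rerr p mu y s) 2\<bar> \<le> sqrt C * s powr (- (4 * \<beta> - 1))"
        using r2b by linarith
    qed
    have "C2 * s powr (- 4 * \<beta>) \<le> C * s powr (- 4 * \<beta>)" using Cge by (intro mult_right_mono) auto
    also have "C * s powr (- 4 * \<beta>) = C / s powr (4 * \<beta>)" using s0 by (simp add: powr_minus divide_simps)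
    finally show "\<bar>rcoef chi0 K p s (\<lambda>y. Rerr p mu y s) 2\<bar> \<le> C / s powr (4 * \<beta>)" using r2b by linarith
    show "Linf_le (\<lambda>y. Vpot p mu y s) C"
      unfolding Linf_le_def using CV(2) s Cge by (intro AE_I2) (meson order_trans)
    fix y :: real
    have "\<bar>Vpot p mu y s\<bar> \<le> CV * (1 + y^2) / s powr (2 * \<beta>)" using CV(2) s by blast
    also have "\<dots> \<le> C * (1 + y^2) / s powr (2 * \<beta>)"
      using Cge ev_nn[of y] s0 by (intro divide_right_mono mult_right_mono) auto
    finally show "\<bar>Vpot p mu y s\<bar> \<le> C * (1 + y^2) / s powr (2 * \<beta>)" .
  qed
qed

end

theorem lemma4p8:
  fixes p mu K gam :: real and chi0 :: "real \<Rightarrow> real"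
  assumes "p > 3" and "mu > 0" and "K \<ge> 6"
    and "smooth_real chi0"
    and "\<forall>x\<ge>0. 0 \<le> chi0 x \<and> chi0 x \<le> 1"
    and "\<forall>x y. 0 \<le> x \<and> x \<le> y \<longrightarrow> chi0 y \<le> chi0 x"
    and "\<forall>x. 0 \<le> x \<and> x \<le> 1 \<longrightarrow> chi0 x = 1"
    and "\<forall>x>2. chi0 x = 0"
    and "3 * betaexp p < gam" and "gam < min (5 * betaexp p - 1) (2 * betaexp p + 1)"
  shows "\<exists>s11 C. C \<ge> 1 \<and> (\<forall>s\<ge>s11.
           (\<lambda>y. Rerr p mu y s) \<in> vartheta chi0 K p gam C s \<and>
           \<bar>rcoef chi0 K p s (\<lambda>y. Rerr p mu y s) 2\<bar> \<le> C / s powr (4 * betaexp p) \<and>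
           Linf_le (\<lambda>y. Vpot p mu y s) C \<and>
           (\<forall>y. \<bar>Vpot p mu y s\<bar> \<le> C * (1 + y^2) / s powr (2 * betaexp p)))"
proof -
  have "(deriv ^^ 0) chi0 differentiable_on UNIV" using assms(4) unfolding smooth_real_def by blast
  hence cont: "continuous_on UNIV chi0" by (simp add: differentiable_imp_continuous_on)
  interpret LL2 p mu chi0 K
    using assms(1,2,3,5,7,8) cont by unfold_locales auto
  show ?thesis using main assms(9,10) by blast
qed

end
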